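(* Let $n\ge 2$, let $\rho$ be an $n$-qubit entangled symmetric state, and let $\mathcal S$ be a collection of subsets of $[n]$ such that the hypergraph $([n],\mathcal S)$ is connected and some $S\in\mathcal S$ satisfies $|S|\ge l(\rho)$. Then for every density matrix $\sigma\in\mathcal C(\rho,\mathcal S)$ and every $T\subseteq[n]$ with $|T|\ge l(\rho)$, the marginal $\sigma_T$ is entangled.
   Context: Let $[n]=\{1,\dots,n\}$, $\mathcal H_{[n]}=(\mathbb C^2)^{\otimes n}$; for $S\subseteq[n]$, $\rho_S$ is the partial trace over the qubits outside $S$. A pure state is biseparable if it is a product $|\alpha\rangle_S\otimes|\beta\rangle_{\bar S}$ for some $\emptyset\ne S\subsetneq[n]$, and fully separable if separable with respect to every bipartition; mixed states are biseparable (fully separable) if convex combinations of such pure states; entangled = not fully separable; genuinely entangled = not biseparable. $\mathcal C(\rho,\mathcal S)=\{\sigma\text{ density matrix on }\mathcal H_{[n]}:\sigma_S=\rho_S\ \forall S\in\mathcal S\}$; $\mathcal S$ detects $\rho$'s GME if all elements of $\mathcal C(\rho,\mathcal S)$ are genuinely entangled; for genuinely entangled $\rho$, $l(\rho)=\min_{\mathcal S\text{ detects }\rho\text{'s GME}}\max_{S\in\mathcal S}|S|$. A state is symmetric if its range lies in the subspace of vectors invariant under swapping any two qubits. The hypergraph $([n],\mathcal S)$ is connected if for every partition of $[n]$ into nonempty $X,Y$ some $S\in\mathcal S$ intersects both. *)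

theory Defs
  imports Complex_Main
begin

text \<open>For a finite set A of qubit labels,
  the computational basis of the Hilbert space of the qubits in A is indexed by
  the subsets x of A (qubit i is in state 1 iff i is in x). A vector on A is a
  function nat set to complex (only values on Pow A matter); an operator on A is
  a matrix nat set to nat set to complex.\<close>

type_synonym qvec = "nat set \<Rightarrow> complex"
type_synonym qop = "nat set \<Rightarrow> nat set \<Rightarrow> complex"

definition qubits :: "nat \<Rightarrow> nat set" where
  "qubits n = {1..n}"

definition apply_op :: "nat set \<Rightarrow> qop \<Rightarrow> qvec \<Rightarrow> qvec" where
  "apply_op A M v = (\<lambda>x. \<Sum>y\<in>Pow A. M x y * v y)"

definition psd :: "nat set \<Rightarrow> qop \<Rightarrow> bool" where
  "psd A M \<longleftrightarrow> (\<forall>v::qvec.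
     (\<Sum>x\<in>Pow A. \<Sum>y\<in>Pow A. cnj (v x) * M x y * v y) \<in> \<real> \<and>
     Re (\<Sum>x\<in>Pow A. \<Sum>y\<in>Pow A. cnj (v x) * M x y * v y) \<ge> 0)"

definition trace_op :: "nat set \<Rightarrow> qop \<Rightarrow> complex" where
  "trace_op A M = (\<Sum>x\<in>Pow A. M x x)"

text \<open>Density matrix on the qubits A (matrix entries outside Pow A are 0, so that
  a density matrix is determined by the function).\<close>
definition density :: "nat set \<Rightarrow> qop \<Rightarrow> bool" where
  "density A M \<longleftrightarrow> psd A M \<and> trace_op A M = 1 \<and>
     (\<forall>x y. \<not> (x \<subseteq> A \<and> y \<subseteq> A) \<longrightarrow> M x y = 0)"

definition ptrace :: "nat set \<Rightarrow> nat set \<Rightarrow> qop \<Rightarrow> qop" where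
  "ptrace A S M = (\<lambda>x y. if x \<subseteq> S \<and> y \<subseteq> S
      then (\<Sum>z\<in>Pow (A - S). M (x \<union> z) (y \<union> z)) else 0)"

definition unit_vec :: "nat set \<Rightarrow> qvec \<Rightarrow> bool" where
  "unit_vec A v \<longleftrightarrow> (\<Sum>x\<in>Pow A. (cmod (v x))\<^sup>2) = 1"

definition product_wrt :: "nat set \<Rightarrow> nat set \<Rightarrow> qvec \<Rightarrow> bool" where
  "product_wrt A S v \<longleftrightarrow> (\<exists>\<alpha> \<beta> :: qvec.
      \<forall>x\<in>Pow A. v x = \<alpha> (x \<inter> S) * \<beta> (x - S))"

definition pure_bisep :: "nat set \<Rightarrow> qvec \<Rightarrow> bool" where
  "pure_bisep A v \<longleftrightarrow> (\<exists>S. S \<noteq> {} \<and> S \<subset> A \<and> product_wrt A S v)"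

definition pure_fullsep :: "nat set \<Rightarrow> qvec \<Rightarrow> bool" where
  "pure_fullsep A v \<longleftrightarrow> (\<forall>S. S \<noteq> {} \<and> S \<subset> A \<longrightarrow> product_wrt A S v)"

definition convex_pure :: "nat set \<Rightarrow> (qvec \<Rightarrow> bool) \<Rightarrow> qop \<Rightarrow> bool" where
  "convex_pure A P M \<longleftrightarrow> (\<exists>(k::nat) (p::nat \<Rightarrow> real) (vs::nat \<Rightarrow> qvec).
      (\<forall>i<k. p i \<ge> 0 \<and> unit_vec A (vs i) \<and> P (vs i)) \<and> (\<Sum>i<k. p i) = 1 \<and>
      (\<forall>x\<in>Pow A. \<forall>y\<in>Pow A.
         M x y = (\<Sum>i<k. complex_of_real (p i) * vs i x * cnj (vs i y))))"

definition biseparable :: "nat set \<Rightarrow> qop \<Rightarrow> bool" where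
  "biseparable A M \<longleftrightarrow> convex_pure A (pure_bisep A) M"

definition fully_separable :: "nat set \<Rightarrow> qop \<Rightarrow> bool" where
  "fully_separable A M \<longleftrightarrow> convex_pure A (pure_fullsep A) M"

definition entangled :: "nat set \<Rightarrow> qop \<Rightarrow> bool" where
  "entangled A M \<longleftrightarrow> \<not> fully_separable A M"

definition genuinely_entangled :: "nat set \<Rightarrow> qop \<Rightarrow> bool" where
  "genuinely_entangled A M \<longleftrightarrow> \<not> biseparable A M"

definition swap_lbl :: "nat \<Rightarrow> nat \<Rightarrow> nat set \<Rightarrow> nat set" where
  "swap_lbl i j x = (if (i \<in> x) = (j \<in> x) then x else (x - {i, j}) \<union> ({i, j} - x))"

definition symmetric_vec :: "nat set \<Rightarrow> qvec \<Rightarrow> bool" where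
  "symmetric_vec A v \<longleftrightarrow> (\<forall>i\<in>A. \<forall>j\<in>A. \<forall>x\<in>Pow A. v (swap_lbl i j x) = v x)"

definition symmetric_state :: "nat set \<Rightarrow> qop \<Rightarrow> bool" where
  "symmetric_state A M \<longleftrightarrow> (\<forall>v. symmetric_vec A (apply_op A M v))"

definition compat :: "nat \<Rightarrow> qop \<Rightarrow> nat set set \<Rightarrow> qop set" where
  "compat n \<rho> \<SS> = {\<sigma>. density (qubits n) \<sigma> \<and>
      (\<forall>S\<in>\<SS>. ptrace (qubits n) S \<sigma> = ptrace (qubits n) S \<rho>)}"

definition detects_GME :: "nat \<Rightarrow> qop \<Rightarrow> nat set set \<Rightarrow> bool" where
  "detects_GME n \<rho> \<SS> \<longleftrightarrow> \<SS> \<subseteq> Pow (qubits n) \<and>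
      (\<forall>\<sigma>\<in>compat n \<rho> \<SS>. genuinely_entangled (qubits n) \<sigma>)"

definition l_param :: "nat \<Rightarrow> qop \<Rightarrow> nat" where
  "l_param n \<rho> = (LEAST k. \<exists>\<SS>. detects_GME n \<rho> \<SS> \<and> (\<forall>S\<in>\<SS>. card S \<le> k))"

definition hyp_connected :: "nat set \<Rightarrow> nat set set \<Rightarrow> bool" where
  "hyp_connected V \<SS> \<longleftrightarrow> (\<forall>X Y. X \<noteq> {} \<and> Y \<noteq> {} \<and> X \<inter> Y = {} \<and> X \<union> Y = V \<longrightarrow>
      (\<exists>S\<in>\<SS>. S \<inter> X \<noteq> {} \<and> S \<inter> Y \<noteq> {}))"

end

theory Submission
  imports Defs
begin

lemma binom_Pow:
  fixes a b :: "'a::comm_semiring_1"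
  assumes "finite A"
  shows "(\<Sum>X\<in>Pow A. a^(card A - card X) * b^(card X)) = (a+b)^card A"
proof -
  have "(\<Prod>x\<in>A. b + a) = (\<Sum>X\<in>Pow A. (\<Prod>x\<in>X. b) * (\<Prod>x\<in>A-X. a))"
    by (rule prod_add[OF assms])
  also have "\<dots> = (\<Sum>X\<in>Pow A. a^(card A - card X) * b^(card X))"
    by (rule sum.cong) (auto simp: card_Diff_subset finite_subset[OF _ assms] mult.commute)
  finally show ?thesis by (simp add: add.commute)
qed

lemma sum_Pow_Un:
  assumes "finite X" "finite Y" "X \<inter> Y = {}"
  shows "(\<Sum>z\<in>Pow (X \<union> Y). F z) = (\<Sum>z1\<in>Pow X. \<Sum>z2\<in>Pow Y. F (z1 \<union> z2))"
proof -
  have img: "Pow (X \<union> Y) = (\<lambda>(a,b). a \<union> b) ` (Pow X \<times> Pow Y)"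
  proof
    show "Pow (X \<union> Y) \<subseteq> (\<lambda>(a,b). a \<union> b) ` (Pow X \<times> Pow Y)"
    proof
      fix z assume "z \<in> Pow (X \<union> Y)"
      then have "z = (z \<inter> X) \<union> (z \<inter> Y)" "(z \<inter> X, z \<inter> Y) \<in> Pow X \<times> Pow Y" by auto
      then show "z \<in> (\<lambda>(a,b). a \<union> b) ` (Pow X \<times> Pow Y)" by (metis (no_types, lifting) case_prod_conv image_eqI)
    qed
  qed auto
  have inj: "inj_on (\<lambda>(a,b). a \<union> b) (Pow X \<times> Pow Y)"
  proof (rule inj_onI, clarify)
    fix a b c d assume h: "a \<subseteq> X" "b \<subseteq> Y" "c \<subseteq> X" "d \<subseteq> Y" "a \<union> b = c \<union> d"
    then have "a = (a \<union> b) \<inter> X" "c = (c \<union> d) \<inter> X" "b = (a \<union> b) \<inter> Y" "d = (c \<union> d) \<inter> Y"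
      using assms(3) by auto
    then show "a = c \<and> b = d" using h(5) by metis
  qed
  have "(\<Sum>z\<in>Pow (X \<union> Y). F z) = (\<Sum>p\<in>Pow X \<times> Pow Y. F ((\<lambda>(a,b). a \<union> b) p))"
    unfolding img by (rule sum.reindex[OF inj, unfolded comp_def])
  also have "\<dots> = (\<Sum>z1\<in>Pow X. \<Sum>z2\<in>Pow Y. F (z1 \<union> z2))"
    by (simp add: sum.cartesian_product split_def)
  finally show ?thesis .
qed

lemma swap_subset: "i \<in> A \<Longrightarrow> j \<in> A \<Longrightarrow> x \<subseteq> A \<Longrightarrow> swap_lbl i j x \<subseteq> A"
  unfolding swap_lbl_def by auto

lemma swap_invol: "swap_lbl i j (swap_lbl i j x) = x"
  unfolding swap_lbl_def by auto

lemma swap_comm: "swap_lbl i j x = swap_lbl j i x"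
  unfolding swap_lbl_def by auto

lemma swap_same: "swap_lbl i i x = x"
  unfolding swap_lbl_def by auto

lemma card_swap: "finite x \<Longrightarrow> card (swap_lbl i j x) = card x"
proof -
  assume f: "finite x"
  show ?thesis
  proof (cases "(i \<in> x) = (j \<in> x)")
    case True then show ?thesis by (simp add: swap_lbl_def)
  next
    case False
    show ?thesis
    proof (cases "i \<in> x")
      case True
      with False have "swap_lbl i j x = insert j (x - {i})" "j \<notin> x" unfolding swap_lbl_def by auto
      then show ?thesis using f True by (simp add: card_Diff_singleton card_gt_0_iff[symmetric]) (metis Suc_pred card_gt_0_iff empty_iff)
    next
      case F2: False
      with False have "swap_lbl i j x = insert i (x - {j})" "j \<in> x" unfolding swap_lbl_def by auto
      then show ?thesis using f F2 by (simp add: card_Diff_singleton) (metis Suc_pred card_gt_0_iff empty_iff)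
    qed
  qed
qed

lemma swap_Un: "i \<in> S \<Longrightarrow> j \<in> S \<Longrightarrow> z \<inter> S = {} \<Longrightarrow> swap_lbl i j (u \<union> z) = swap_lbl i j u \<union> z"
  unfolding swap_lbl_def by auto

lemma swap_inv_card:
  assumes A: "finite A"
    and inv: "\<forall>i\<in>A. \<forall>j\<in>A. \<forall>x\<subseteq>A. g (swap_lbl i j x) = g x"
  shows "x \<subseteq> A \<Longrightarrow> x' \<subseteq> A \<Longrightarrow> card x = card x' \<Longrightarrow> g x = g x'"
proof (induction "card (x - x')" arbitrary: x)
  case 0
  have fx: "finite x" "finite x'" using 0 A finite_subset by auto
  have "x - x' = {}" using 0 fx by simp
  then have "x \<subseteq> x'" by auto
  then have "x = x'" using fx 0 by (simp add: card_subset_eq)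
  then show ?case by simp
next
  case (Suc m)
  have fx: "finite x" "finite x'" using Suc A finite_subset by auto
  obtain i where i: "i \<in> x" "i \<notin> x'" using Suc(2) by (metis Diff_iff card.empty ex_in_conv nat.distinct(1))
  have "card (x - x') = card (x' - x)"
    using fx Suc(5) by (metis Diff_Int2 card_Diff_subset_Int finite_Int inf_commute Diff_Diff_Int Diff_subset inf.absorb_iff2 inf_le1)
  then obtain j where j: "j \<in> x'" "j \<notin> x" using Suc(2) by (metis Diff_iff card.empty ex_in_conv nat.distinct(1))
  define x1 where "x1 = swap_lbl i j x"
  have x1: "x1 = insert j (x - {i})" unfolding x1_def swap_lbl_def using i j by auto
  have x1A: "x1 \<subseteq> A" using x1 Suc j by auto
  have "x1 - x' = (x - x') - {i}" using x1 i j by auto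
  then have c1: "m = card (x1 - x')" using Suc(2) i fx by simp
  have c2: "card x1 = card x'" using x1 fx j i Suc(5) by (simp add: card_Diff_singleton) (metis Suc_pred card_gt_0_iff empty_iff)
  have "g x1 = g x" unfolding x1_def using inv Suc i j by (meson in_mono)
  with Suc(1)[OF c1 x1A Suc(4) c2] show ?case by simp
qed

definition qf :: "nat set \<Rightarrow> qop \<Rightarrow> qvec \<Rightarrow> qvec \<Rightarrow> complex" where
  "qf A M u w = (\<Sum>x\<in>Pow A. \<Sum>y\<in>Pow A. cnj (u x) * M x y * w y)"

lemma qf_add:
  "qf A M (\<lambda>z. u z + c * w z) (\<lambda>z. u z + c * w z) =
     qf A M u u + c * qf A M u w + cnj c * qf A M w u + (c * cnj c) * qf A M w w"
  unfolding qf_def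
  by (simp add: algebra_simps sum.distrib sum_distrib_left)

lemma psd_qf: "psd A M \<Longrightarrow> qf A M v v \<in> \<real> \<and> Re (qf A M v v) \<ge> 0"
  unfolding psd_def qf_def by blast

lemma qf_delta_left:
  assumes "y \<in> Pow A" "finite A"
  shows "qf A M (\<lambda>z. if z = y then 1 else 0) w = (\<Sum>x\<in>Pow A. M y x * w x)"
proof -
  have "qf A M (\<lambda>z. if z = y then 1 else 0) w =
        (\<Sum>x\<in>Pow A. if x = y then (\<Sum>z\<in>Pow A. M x z * w z) else 0)"
    unfolding qf_def by (rule sum.cong) (auto simp: sum_distrib_left)
  also have "\<dots> = (\<Sum>x\<in>Pow A. M y x * w x)" using assms by (simp add: sum.delta)
  finally show ?thesis .
qed

lemma qf_delta_right:
  assumes "y \<in> Pow A" "finite A"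
  shows "qf A M u (\<lambda>z. if z = y then 1 else 0) = (\<Sum>x\<in>Pow A. cnj (u x) * M x y)"
proof -
  have "qf A M u (\<lambda>z. if z = y then 1 else 0) =
        (\<Sum>x\<in>Pow A. \<Sum>z\<in>Pow A. if z = y then cnj (u x) * M x z else 0)"
    unfolding qf_def by (intro sum.cong) auto
  also have "\<dots> = (\<Sum>x\<in>Pow A. cnj (u x) * M x y)" using assms by (simp add: sum.delta)
  finally show ?thesis .
qed

lemma real_lin_quad:
  fixes L Q :: real
  assumes "Q \<ge> 0" "\<And>t. t * L + t^2 * Q \<ge> 0"
  shows "L = 0"
proof -
  define t where "t = - L / (Q + 1)"
  have "t * L + t^2 * Q \<ge> 0" by (rule assms(2))
  moreover have "(Q+1)^2 * (t * L + t^2 * Q) = -(L^2)"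
  proof -
    have d: "Q + 1 \<noteq> 0" using assms(1) by simp
    have "(Q+1)^2 * (t * L + t^2 * Q) = (Q+1) * ((Q+1) * t) * L + ((Q+1) * t)^2 * Q"
      by (simp add: power2_eq_square algebra_simps)
    also have "(Q+1) * t = -L" unfolding t_def using d by simp
    finally show ?thesis by (simp add: power2_eq_square algebra_simps)
  qed
  ultimately have "L^2 \<le> 0" using assms(1)
    by (metis neg_0_le_iff_le zero_le_mult_iff zero_le_power2)
  then show ?thesis by simp
qed

lemma two_coeff:
  fixes \<beta> \<gamma> q :: complex
  assumes "q \<in> \<real>" "Re q \<ge> 0"
    and h: "\<And>c. (c * \<beta> + cnj c * \<gamma> + (c * cnj c) * q) \<in> \<real> \<and> Re (c * \<beta> + cnj c * \<gamma> + (c * cnj c) * q) \<ge> 0"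
  shows "\<gamma> = 0"
proof -
  have r1: "Re (\<beta> + \<gamma>) = 0"
  proof (rule real_lin_quad[of "Re q"])
    show "Re q \<ge> 0" by fact
    fix t :: real
    have "Re (complex_of_real t * \<beta> + cnj (complex_of_real t) * \<gamma> + (complex_of_real t * cnj (complex_of_real t)) * q) \<ge> 0"
      using h by blast
    then show "t * Re (\<beta> + \<gamma>) + t^2 * Re q \<ge> 0" by (simp add: power2_eq_square algebra_simps)
  qed
  have i1: "Im (\<beta> + \<gamma>) = 0"
  proof -
    have "(\<beta> + \<gamma> + q) \<in> \<real>" using h[of 1] by simp
    then show ?thesis using assms(1) by (simp add: complex_is_Real_iff)
  qed
  have r2: "Im (\<gamma> - \<beta>) = 0"
  proof (rule real_lin_quad[of "Re q"])
    show "Re q \<ge> 0" by fact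
    fix t :: real
    have "Re ((\<i> * t) * \<beta> + cnj (\<i> * t) * \<gamma> + ((\<i> * t) * cnj (\<i> * t)) * q) \<ge> 0"
      using h by blast
    then show "t * Im (\<gamma> - \<beta>) + t^2 * Re q \<ge> 0" by (simp add: power2_eq_square algebra_simps)
  qed
  have i2: "Re (\<beta> - \<gamma>) = 0"
  proof -
    have "(\<i> * \<beta> - \<i> * \<gamma> + q) \<in> \<real>" using h[of "\<i>"] by simp
    then show ?thesis using assms(1) by (simp add: complex_is_Real_iff)
  qed
  show ?thesis using r1 i1 r2 i2 by (simp add: complex_eq_iff)
qed

lemma psd_kernel:
  assumes "psd A M" "finite A" "qf A M w w = 0" "y \<in> Pow A"
  shows "(\<Sum>x\<in>Pow A. M y x * w x) = 0"
proof -
  define e :: qvec where "e = (\<lambda>z. if z = y then 1 else 0)"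
  have "qf A M e w = 0"
  proof (rule two_coeff[of "qf A M e e" "qf A M w e"])
    show "qf A M e e \<in> \<real>" "Re (qf A M e e) \<ge> 0" using psd_qf[OF assms(1)] by auto
    fix c
    have "qf A M (\<lambda>z. w z + c * e z) (\<lambda>z. w z + c * e z) =
      c * qf A M w e + cnj c * qf A M e w + (c * cnj c) * qf A M e e"
      using qf_add[of A M w c e] assms(3) by simp
    then show "(c * qf A M w e + cnj c * qf A M e w + (c * cnj c) * qf A M e e) \<in> \<real> \<and>
       Re (c * qf A M w e + cnj c * qf A M e w + (c * cnj c) * qf A M e e) \<ge> 0"
      using psd_qf[OF assms(1)] by metis
  qed
  then show ?thesis unfolding e_def using qf_delta_left[OF assms(4,2)] by simp
qed

lemma psd_herm:
  assumes "psd A M" "finite A" "a \<in> Pow A" "b \<in> Pow A"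
  shows "M a b = cnj (M b a)"
proof -
  define ea :: qvec where "ea = (\<lambda>z. if z = a then 1 else 0)"
  define eb :: qvec where "eb = (\<lambda>z. if z = b then 1 else 0)"
  have ab: "qf A M ea eb = M a b" unfolding ea_def eb_def
    using qf_delta_left[OF assms(3,2)] assms by (simp add: if_distrib sum.delta cong: if_cong)
  have ba: "qf A M eb ea = M b a" unfolding ea_def eb_def
    using qf_delta_left[OF assms(4,2)] assms by (simp add: if_distrib sum.delta cong: if_cong)
  have qa: "qf A M ea ea \<in> \<real>" "qf A M eb eb \<in> \<real>" using psd_qf[OF assms(1)] by auto
  have "\<And>c. qf A M ea ea + c * M a b + cnj c * M b a + (c * cnj c) * qf A M eb eb \<in> \<real>"
    using qf_add[of A M ea _ eb] psd_qf[OF assms(1)] ab ba by metis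
  from this[of 1] this[of "\<i>"] qa show ?thesis
    by (simp add: complex_is_Real_iff complex_eq_iff)
qed

lemma decomp_sym:
  fixes K :: nat and p :: "nat \<Rightarrow> real"
  assumes A: "finite A" and ij: "i \<in> A" "j \<in> A"
    and dec: "\<forall>x\<in>Pow A. \<forall>y\<in>Pow A. M x y = (\<Sum>k<K. complex_of_real (p k) * vs k x * cnj (vs k y))"
    and p: "\<forall>k<K. p k \<ge> 0"
    and row: "\<forall>x\<in>Pow A. \<forall>y\<in>Pow A. M (swap_lbl i j x) y = M x y"
    and col: "\<forall>x\<in>Pow A. \<forall>y\<in>Pow A. M x (swap_lbl i j y) = M x y"
    and k: "k < K" "p k > 0" and x: "x \<in> Pow A"
  shows "vs k (swap_lbl i j x) = vs k x"
proof -
  define sx where "sx = swap_lbl i j x"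
  have sxA: "sx \<in> Pow A" unfolding sx_def using swap_subset ij x by auto
  have "complex_of_real (\<Sum>k<K. p k * (cmod (vs k x - vs k sx))^2)
      = (\<Sum>k<K. complex_of_real (p k) * ((vs k x - vs k sx) * cnj (vs k x - vs k sx)))"
    by (simp only: of_real_sum of_real_mult complex_norm_square)
  also have "\<dots> = M x x - M x sx - M sx x + M sx sx"
    using dec x sxA by (simp add: algebra_simps sum.distrib sum_subtractf)
  also have "\<dots> = 0"
  proof -
    have "M x sx = M x x" using col x unfolding sx_def by blast
    moreover have "M sx x = M x x" using row x unfolding sx_def by blast
    moreover have "M sx sx = M x sx" using row x sxA unfolding sx_def by blast
    ultimately show ?thesis by simp
  qed
  finally have "complex_of_real (\<Sum>k<K. p k * (cmod (vs k x - vs k sx))^2) = 0" .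
  then have "(\<Sum>k<K. p k * (cmod (vs k x - vs k sx))^2) = 0" by (simp only: of_real_eq_0_iff)
  then have "\<forall>k'\<in>{..<K}. p k' * (cmod (vs k' x - vs k' sx))^2 = 0"
  proof -
    have fin: "finite {..<K}" by simp
    have nn: "\<forall>k'\<in>{..<K}. 0 \<le> p k' * (cmod (vs k' x - vs k' sx))^2" using p by simp
    show ?thesis using sum_nonneg_eq_0_iff[OF fin, of "\<lambda>k'. p k' * (cmod (vs k' x - vs k' sx))^2"] nn
      \<open>(\<Sum>k<K. p k * (cmod (vs k x - vs k sx))^2) = 0\<close> by blast
  qed
  then have "p k * (cmod (vs k x - vs k sx))^2 = 0" using k by blast
  then show ?thesis using k unfolding sx_def by simp
qed

lemma convex_psd:
  fixes K :: nat and p :: "nat \<Rightarrow> real"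
  assumes dec: "\<forall>x\<in>Pow A. \<forall>y\<in>Pow A. M x y = (\<Sum>k<K. complex_of_real (p k) * vs k x * cnj (vs k y))"
    and p: "\<forall>k<K. p k \<ge> 0"
  shows "psd A M"
proof -
  { fix v :: qvec
    define z where "z k = (\<Sum>x\<in>Pow A. cnj (v x) * vs k x)" for k
    have "(\<Sum>x\<in>Pow A. \<Sum>y\<in>Pow A. cnj (v x) * M x y * v y)
       = (\<Sum>x\<in>Pow A. \<Sum>y\<in>Pow A. \<Sum>k<K. complex_of_real (p k) * (cnj (v x) * vs k x) * cnj (cnj (v y) * vs k y))"
      using dec by (intro sum.cong refl) (simp add: sum_distrib_left sum_distrib_right algebra_simps)
    also have "\<dots> = (\<Sum>k<K. complex_of_real (p k) * (z k * cnj (z k)))"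
      unfolding z_def
      by (simp add: sum_distrib_left sum_distrib_right algebra_simps sum.swap[of _ "{..<K}"] cnj_sum)
    also have "\<dots> = complex_of_real (\<Sum>k<K. p k * (cmod (z k))^2)"
      by (simp only: of_real_sum of_real_mult complex_norm_square)
    finally have e: "(\<Sum>x\<in>Pow A. \<Sum>y\<in>Pow A. cnj (v x) * M x y * v y) = complex_of_real (\<Sum>k<K. p k * (cmod (z k))^2)" .
    have "(\<Sum>k<K. p k * (cmod (z k))^2) \<ge> 0" using p by (intro sum_nonneg) auto
    with e have "(\<Sum>x\<in>Pow A. \<Sum>y\<in>Pow A. cnj (v x) * M x y * v y) \<in> \<real> \<and>
       Re (\<Sum>x\<in>Pow A. \<Sum>y\<in>Pow A. cnj (v x) * M x y * v y) \<ge> 0" by simp }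
  then show ?thesis unfolding psd_def by blast
qed

lemma ptrace_comp:
  assumes N: "finite N" and WB: "W \<subseteq> B" and BN: "B \<subseteq> N" and uv: "u \<subseteq> W" "v \<subseteq> W"
  shows "ptrace N W M u v = ptrace B W (ptrace N B M) u v"
proof -
  have fin: "finite (B - W)" "finite (N - B)" using N BN finite_subset by auto
  have NW: "N - W = (B - W) \<union> (N - B)" using WB BN by auto
  have "ptrace N W M u v = (\<Sum>z\<in>Pow (N - W). M (u \<union> z) (v \<union> z))"
    using uv unfolding ptrace_def by simp
  also have "\<dots> = (\<Sum>z1\<in>Pow (B - W). \<Sum>z2\<in>Pow (N - B). M (u \<union> (z1 \<union> z2)) (v \<union> (z1 \<union> z2)))"
    unfolding NW by (rule sum_Pow_Un) (use fin in auto)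
  also have "\<dots> = (\<Sum>z1\<in>Pow (B - W). ptrace N B M (u \<union> z1) (v \<union> z1))"
  proof (rule sum.cong[OF refl])
    fix z1 assume "z1 \<in> Pow (B - W)"
    then have "u \<union> z1 \<subseteq> B" "v \<union> z1 \<subseteq> B" using uv WB by auto
    then show "(\<Sum>z2\<in>Pow (N - B). M (u \<union> (z1 \<union> z2)) (v \<union> (z1 \<union> z2))) = ptrace N B M (u \<union> z1) (v \<union> z1)"
      unfolding ptrace_def by (simp add: Un_assoc)
  qed
  also have "\<dots> = ptrace B W (ptrace N B M) u v"
    using uv unfolding ptrace_def[of B W] by simp
  finally show ?thesis .
qed

definition sym_op :: "nat set \<Rightarrow> qop \<Rightarrow> bool" where
  "sym_op A M \<longleftrightarrow> (\<forall>x y x' y'. x \<subseteq> A \<longrightarrow> y \<subseteq> A \<longrightarrow> x' \<subseteq> A \<longrightarrow> y' \<subseteq> A \<longrightarrow>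
      card x = card x' \<longrightarrow> card y = card y' \<longrightarrow> M x y = M x' y')"

lemma ptrace_transport:
  assumes N: "finite N" and sym: "sym_op N M"
    and W: "W \<subseteq> N" "W' \<subseteq> N" "card W = card W'"
    and uv: "u \<subseteq> W" "v \<subseteq> W" "u' \<subseteq> W'" "v' \<subseteq> W'" "card u = card u'" "card v = card v'"
  shows "ptrace N W M u v = ptrace N W' M u' v'"
proof -
  have fin: "finite (N - W)" "finite (N - W')" using N by auto
  have "card (N - W) = card (N - W')" using W N by (simp add: card_Diff_subset finite_subset)
  then obtain h where h: "bij_betw h (N - W) (N - W')" using fin finite_same_card_bij by blast
  have hp: "bij_betw (image h) (Pow (N - W)) (Pow (N - W'))" by (rule bij_betw_Pow[OF h])
  have "ptrace N W' M u' v' = (\<Sum>z\<in>Pow (N - W'). M (u' \<union> z) (v' \<union> z))"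
    using uv unfolding ptrace_def by simp
  also have "\<dots> = (\<Sum>z\<in>Pow (N - W). M (u' \<union> h ` z) (v' \<union> h ` z))"
    by (rule sum.reindex_bij_betw[OF hp, symmetric])
  also have "\<dots> = (\<Sum>z\<in>Pow (N - W). M (u \<union> z) (v \<union> z))"
  proof (rule sum.cong[OF refl])
    fix z assume z: "z \<in> Pow (N - W)"
    have fz: "finite z" "finite u" "finite v" "finite u'" "finite v'"
      using z fin uv W N finite_subset by (auto dest: finite_subset)
    have inj: "inj_on h z" using h z by (meson PowD bij_betw_imp_inj_on inj_on_subset)
    have hz: "h ` z \<subseteq> N - W'" using h z by (auto simp: bij_betw_def)
    have c: "card (h ` z) = card z" using inj by (simp add: card_image)
    have d1: "u \<inter> z = {}" "v \<inter> z = {}" using z uv by auto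
    have d2: "u' \<inter> h ` z = {}" "v' \<inter> h ` z = {}" using hz uv by auto
    have cu: "card (u \<union> z) = card (u' \<union> h ` z)"
      using d1 d2 fz c uv by (simp add: card_Un_disjoint finite_imageI)
    have cv: "card (v \<union> z) = card (v' \<union> h ` z)"
      using d1 d2 fz c uv by (simp add: card_Un_disjoint finite_imageI)
    show "M (u' \<union> h ` z) (v' \<union> h ` z) = M (u \<union> z) (v \<union> z)"
    proof -
      have s1: "u' \<union> h ` z \<subseteq> N" "v' \<union> h ` z \<subseteq> N" using uv W hz by auto
      have s2: "u \<union> z \<subseteq> N" "v \<union> z \<subseteq> N" using uv W z by auto
      show ?thesis using sym s1 s2 cu cv unfolding sym_op_def by simp
    qed
  qed
  also have "\<dots> = ptrace N W M u v"
    using uv unfolding ptrace_def by simp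
  finally show ?thesis by simp
qed

definition phi :: "nat \<Rightarrow> complex \<Rightarrow> complex \<Rightarrow> nat set \<Rightarrow> complex" where
  "phi m a b x = a^(m - card x) * b^(card x)"

lemma pow_split:
  fixes a b :: complex
  shows "a^(i+k) * (b^(j+l) * cnj (a^(i'+k) * b^(j'+l))) =
    a^i * (b^j * (cnj (a^i' * b^j') * ((a * cnj a)^k * (b * cnj b)^l)))"
  by (simp add: power_add power_mult_distrib mult_ac)

lemma marg_phi:
  fixes K :: nat and p :: "nat \<Rightarrow> real"
  assumes A: "finite A" and W: "W \<subseteq> A"
    and nrm: "\<forall>k<K. a k * cnj (a k) + b k * cnj (b k) = 1"
    and dec: "\<forall>x\<in>Pow A. \<forall>y\<in>Pow A. M x y =
        (\<Sum>k<K. complex_of_real (p k) * phi (card A) (a k) (b k) x * cnj (phi (card A) (a k) (b k) y))"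
    and uv: "u \<subseteq> W" "v \<subseteq> W"
  shows "ptrace A W M u v =
        (\<Sum>k<K. complex_of_real (p k) * phi (card W) (a k) (b k) u * cnj (phi (card W) (a k) (b k) v))"
proof -
  define m where "m = card (A - W)"
  have fW: "finite W" "finite (A - W)" using A W finite_subset by auto
  have cA: "card A = card W + m" unfolding m_def using A W
    by (simp add: card_Diff_subset fW(1) card_mono)
  have cu: "card u \<le> card W" "card v \<le> card W" using uv fW by (auto intro: card_mono)
  have h1: "ptrace A W M u v = (\<Sum>z\<in>Pow (A - W). M (u \<union> z) (v \<union> z))"
    using uv unfolding ptrace_def by simp
  have h2: "(\<Sum>z\<in>Pow (A - W). M (u \<union> z) (v \<union> z)) = (\<Sum>z\<in>Pow (A - W). \<Sum>k<K. complex_of_real (p k) *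
      (phi (card W) (a k) (b k) u * cnj (phi (card W) (a k) (b k) v)) *
      ((a k * cnj (a k))^(m - card z) * (b k * cnj (b k))^(card z)))"
  proof (rule sum.cong[OF refl])
    fix z assume z: "z \<in> Pow (A - W)"
    have fz: "finite z" "finite u" "finite v" using z fW uv finite_subset[of z "A - W"] finite_subset by auto
    have cz: "card z \<le> m" unfolding m_def using z fW by (auto intro: card_mono)
    have cuz: "card (u \<union> z) = card u + card z" "card (v \<union> z) = card v + card z"
      using fz z uv by (auto intro!: card_Un_disjoint)
    have e1: "card A - (card u + card z) = (card W - card u) + (m - card z)"
      using cuz cA cu cz by simp
    have e2: "card A - (card v + card z) = (card W - card v) + (m - card z)"
      using cuz cA cu cz by simp
    have "M (u \<union> z) (v \<union> z) = (\<Sum>k<K. complex_of_real (p k) * phi (card A) (a k) (b k) (u \<union> z) * cnj (phi (card A) (a k) (b k) (v \<union> z)))"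
    proof -
      have "u \<union> z \<in> Pow A" "v \<union> z \<in> Pow A" using uv W z by auto
      then show ?thesis using dec by blast
    qed
    also have "\<dots> = (\<Sum>k<K. complex_of_real (p k) *
      (phi (card W) (a k) (b k) u * cnj (phi (card W) (a k) (b k) v)) *
      ((a k * cnj (a k))^(m - card z) * (b k * cnj (b k))^(card z)))"
      unfolding phi_def cuz e1 e2 by (intro sum.cong refl) (simp only: mult.assoc pow_split)
    finally show "M (u \<union> z) (v \<union> z) = (\<Sum>k<K. complex_of_real (p k) *
      (phi (card W) (a k) (b k) u * cnj (phi (card W) (a k) (b k) v)) *
      ((a k * cnj (a k))^(m - card z) * (b k * cnj (b k))^(card z)))" .
  qed
  have h3: "(\<Sum>z\<in>Pow (A - W). \<Sum>k<K. complex_of_real (p k) *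
      (phi (card W) (a k) (b k) u * cnj (phi (card W) (a k) (b k) v)) *
      ((a k * cnj (a k))^(m - card z) * (b k * cnj (b k))^(card z))) = (\<Sum>k<K. complex_of_real (p k) *
      (phi (card W) (a k) (b k) u * cnj (phi (card W) (a k) (b k) v)) *
      (\<Sum>z\<in>Pow (A - W). (a k * cnj (a k))^(m - card z) * (b k * cnj (b k))^(card z)))"
    by (simp only: sum_distrib_left mult.assoc) (rule sum.swap)
  have h4: "(\<Sum>k<K. complex_of_real (p k) *
      (phi (card W) (a k) (b k) u * cnj (phi (card W) (a k) (b k) v)) *
      (\<Sum>z\<in>Pow (A - W). (a k * cnj (a k))^(m - card z) * (b k * cnj (b k))^(card z))) = (\<Sum>k<K. complex_of_real (p k) * phi (card W) (a k) (b k) u * cnj (phi (card W) (a k) (b k) v))"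
  proof (rule sum.cong[OF refl])
    fix k assume k: "k \<in> {..<K}"
    have nk: "a k * cnj (a k) + b k * cnj (b k) = 1" using nrm k by blast
    have s1: "(\<Sum>z\<in>Pow (A - W). (a k * cnj (a k))^(m - card z) * (b k * cnj (b k))^(card z)) = 1"
      using binom_Pow[OF fW(2), of "a k * cnj (a k)" "b k * cnj (b k)"] unfolding m_def nk by simp
    show "complex_of_real (p k) *
      (phi (card W) (a k) (b k) u * cnj (phi (card W) (a k) (b k) v)) *
      (\<Sum>z\<in>Pow (A - W). (a k * cnj (a k))^(m - card z) * (b k * cnj (b k))^(card z)) =
      complex_of_real (p k) * phi (card W) (a k) (b k) u * cnj (phi (card W) (a k) (b k) v)"
      by (simp only: s1 mult_1_right mult.assoc)
  qed
  show ?thesis unfolding h1 h2 h3 h4 by (rule refl)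
qed

lemma geom0:
  fixes f A B :: "nat \<Rightarrow> complex"
  assumes s: "s \<ge> 1" and r: "r \<ge> 1"
    and h: "\<And>a b. a \<le> s \<Longrightarrow> b \<le> r \<Longrightarrow> f (a + b) = A a * B b"
    and f0: "f 0 \<noteq> 0"
  shows "\<exists>t. \<forall>m \<le> s + r. f m = f 0 * t^m"
proof -
  have A0: "A 0 \<noteq> 0" and B0: "B 0 \<noteq> 0" using h[of 0 0] f0 by auto
  define t where "t = B 1 / B 0"
  have Aa: "A a = A 0 * t^a" if "a \<le> s" for a
    using that
  proof (induction a)
    case 0 then show ?case by simp
  next
    case (Suc a)
    have "A (Suc a) * B 0 = A a * B 1" using h[of "Suc a" 0] h[of a 1] Suc.prems r by simp
    then have "A (Suc a) = A a * t" unfolding t_def using B0 by (simp add: field_simps)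
    then show ?case using Suc by simp
  qed
  have A1: "A 1 = A 0 * t" using Aa[of 1] s by simp
  have Bb: "B b = B 0 * t^b" if "b \<le> r" for b
    using that
  proof (induction b)
    case 0 then show ?case by simp
  next
    case (Suc b)
    have "A 0 * B (Suc b) = A 1 * B b" using h[of 0 "Suc b"] h[of 1 b] Suc.prems s by simp
    then have "B (Suc b) = B b * t" using A1 A0 by (simp add: field_simps)
    then show ?case using Suc by simp
  qed
  show ?thesis
  proof (intro exI allI impI)
    fix m assume m: "m \<le> s + r"
    define a where "a = min m s"
    define b where "b = m - a"
    have ab: "a \<le> s" "b \<le> r" "m = a + b" unfolding a_def b_def using m by auto
    have "f m = A a * B b" using h[OF ab(1,2)] ab(3) by simp
    also have "\<dots> = (A 0 * B 0) * t^m" using Aa[OF ab(1)] Bb[OF ab(2)] ab(3) by (simp add: power_add)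
    also have "A 0 * B 0 = f 0" using h[of 0 0] by simp
    finally show "f m = f 0 * t^m" .
  qed
qed

lemma minor:
  fixes f A B :: "nat \<Rightarrow> complex"
  assumes s: "s \<ge> 1" and r: "r \<ge> 1"
    and h: "\<And>a b. a \<le> s \<Longrightarrow> b \<le> r \<Longrightarrow> f (a + b) = A a * B b"
    and m: "1 \<le> m" "m + 1 \<le> s + r"
  shows "f m * f m = f (m - 1) * f (m + 1)"
proof -
  define b where "b = (if m \<le> s then 1 else m - s + 1)"
  define a where "a = m - b"
  have ab: "a + 1 \<le> s" "1 \<le> b" "b \<le> r" "a + b = m" unfolding a_def b_def using s r m by auto
  have e1: "f m = A a * B b" using h[of a b] ab by simp
  have e2: "f m = A (a+1) * B (b - 1)" using h[of "a+1" "b-1"] ab by simp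
  have e3: "f (m - 1) = A a * B (b - 1)" using h[of a "b-1"] ab by simp
  have e4: "f (m + 1) = A (a + 1) * B b" using h[of "a+1" b] ab by simp
  have "f m * f m = (A a * B b) * (A (a+1) * B (b - 1))" by (rule arg_cong2[where f = "(*)", OF e1 e2])
  also have "\<dots> = f (m - 1) * f (m + 1)" unfolding e3 e4 by (simp add: ac_simps)
  finally show ?thesis .
qed

lemma geom:
  fixes f A B :: "nat \<Rightarrow> complex"
  assumes s: "s \<ge> 1" and r: "r \<ge> 1"
    and h: "\<And>a b. a \<le> s \<Longrightarrow> b \<le> r \<Longrightarrow> f (a + b) = A a * B b"
  shows "\<exists>c x y. \<forall>m \<le> s + r. f m = c * x^(s + r - m) * y^m"
proof (cases "f 0 \<noteq> 0")
  case True
  have "\<exists>t. \<forall>m \<le> s + r. f m = f 0 * t^m"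
  proof (rule geom0[of s r f A B])
    show "1 \<le> s" "1 \<le> r" by (fact s, fact r)
    show "\<And>a b. a \<le> s \<Longrightarrow> b \<le> r \<Longrightarrow> f (a + b) = A a * B b" by (rule h)
    show "f 0 \<noteq> 0" by (fact True)
  qed
  then obtain t where t: "\<forall>m \<le> s + r. f m = f 0 * t^m" by (elim exE)
  have "\<forall>m \<le> s + r. f m = f 0 * 1^(s + r - m) * t^m"
    unfolding power_one mult_1_right by (rule t)
  then show ?thesis by blast
next
  case F0: False
  show ?thesis
  proof (cases "f (s + r) \<noteq> 0")
    case True
    define g where "g m = f (s + r - m)" for m
    have hg: "g (a + b) = A (s - a) * B (r - b)" if "a \<le> s" "b \<le> r" for a b
    proof -
      have "s + r - (a + b) = (s - a) + (r - b)" using that by simp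
      then show ?thesis unfolding g_def using h[of "s - a" "r - b"] by simp
    qed
    have "g 0 \<noteq> 0" unfolding g_def using True by simp
    have "\<exists>t. \<forall>m \<le> s + r. g m = g 0 * t^m"
    proof (rule geom0[of s r g "\<lambda>a. A (s - a)" "\<lambda>b. B (r - b)"])
      show "1 \<le> s" "1 \<le> r" by (fact s, fact r)
      show "\<And>a b. a \<le> s \<Longrightarrow> b \<le> r \<Longrightarrow> g (a + b) = A (s - a) * B (r - b)" by (rule hg)
      show "g 0 \<noteq> 0" by fact
    qed
    then obtain t where t: "\<forall>m \<le> s + r. g m = g 0 * t^m" by (elim exE)
    show ?thesis
    proof (rule exI[of _ "f (s + r)"], rule exI[of _ t], rule exI[of _ 1], intro allI impI)
      fix m assume m: "m \<le> s + r"
      have "f m = g (s + r - m)" unfolding g_def using m by simp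
      also have "\<dots> = g 0 * t^(s + r - m)" using t diff_le_self[of "s + r" m] by blast
      also have "g 0 = f (s + r)" unfolding g_def by simp
      finally show "f m = f (s + r) * t^(s + r - m) * 1^m" by (simp only: power_one mult_1_right)
    qed
  next
    case FN: False
    have z: "f m = 0" if "m \<le> s + r" for m
      using that
    proof (induction m)
      case 0 then show ?case using F0 by simp
    next
      case (Suc m)
      show ?case
      proof (cases "Suc m = s + r")
        case True then show ?thesis using FN by simp
      next
        case False
        then have "1 \<le> Suc m" "Suc m + 1 \<le> s + r" using Suc.prems by auto
        from minor[of s r f A B, OF s r h this] have "f (Suc m) * f (Suc m) = f m * f (Suc m + 1)" by simp
        then show ?thesis using Suc by simp
      qed
    qed
    show ?thesis by (intro exI[of _ 0] exI[of _ 0] exI[of _ 0]) (simp add: z)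
  qed
qed

lemma sym_card:
  assumes A: "finite A" and sym: "\<forall>i\<in>A. \<forall>j\<in>A. \<forall>x\<in>Pow A. v (swap_lbl i j x) = v x"
    and x: "x \<subseteq> A" "x' \<subseteq> A" "card x = card x'"
  shows "v x = v x'"
  by (rule swap_inv_card[OF A _ x]) (use sym in auto)

lemma some_subset_card:
  assumes "finite A" "m \<le> card A"
  shows "(SOME X. X \<subseteq> A \<and> card X = m) \<subseteq> A \<and> card (SOME X. X \<subseteq> A \<and> card X = m) = m"
proof -
  obtain X where "X \<subseteq> A" "card X = m" using obtain_subset_with_card_n[OF assms(2)] by metis
  then show ?thesis by (intro someI_ex[of "\<lambda>X. X \<subseteq> A \<and> card X = m"]) blast
qed

lemma sym_prod_geom:
  fixes v \<alpha> \<beta> :: qvec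
  assumes A: "finite A" and S: "S \<subseteq> A" "S \<noteq> {}" "S \<noteq> A"
    and sym: "\<forall>i\<in>A. \<forall>j\<in>A. \<forall>x\<in>Pow A. v (swap_lbl i j x) = v x"
    and prod: "\<forall>x\<in>Pow A. v x = \<alpha> (x \<inter> S) * \<beta> (x - S)"
  shows "\<exists>c x0 x1. \<forall>x\<subseteq>A. v x = c * x0^(card A - card x) * x1^(card x)"
proof -
  define s where "s = card S"
  define r where "r = card (A - S)"
  have fS: "finite S" "finite (A - S)" using A S finite_subset by auto
  have s1: "s \<ge> 1" unfolding s_def using fS S by (simp add: Suc_le_eq card_gt_0_iff)
  have r1: "r \<ge> 1" unfolding r_def using fS S by (simp add: Suc_le_eq card_gt_0_iff)
  have cA: "card A = s + r" unfolding s_def r_def using A S fS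
    using card_Diff_subset[OF fS(1) S(1)] card_mono[OF A S(1)] by simp
  define U where "U a = (SOME X. X \<subseteq> S \<and> card X = a)" for a
  define W where "W b = (SOME X. X \<subseteq> A - S \<and> card X = b)" for b
  define F where "F m = (SOME X. X \<subseteq> A \<and> card X = m)" for m
  define f where "f m = v (F m)" for m
  have U: "U a \<subseteq> S \<and> card (U a) = a" if "a \<le> s" for a
    unfolding U_def using some_subset_card[OF fS(1)] that s_def by simp
  have W: "W b \<subseteq> A - S \<and> card (W b) = b" if "b \<le> r" for b
    unfolding W_def using some_subset_card[OF fS(2)] that r_def by simp
  have Fm: "F m \<subseteq> A \<and> card (F m) = m" if "m \<le> card A" for m
    unfolding F_def using some_subset_card[OF A] that by simp
  have vf: "v x = f (card x)" if "x \<subseteq> A" for x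
  proof -
    have "card x \<le> card A" using that A by (simp add: card_mono)
    then have "F (card x) \<subseteq> A" "card (F (card x)) = card x" using Fm by auto
    then show ?thesis unfolding f_def using sym_card[OF A sym that] by simp
  qed
  have h: "f (a + b) = \<alpha> (U a) * \<beta> (W b)" if "a \<le> s" "b \<le> r" for a b
  proof -
    have ua: "U a \<subseteq> S" "card (U a) = a" using U[OF that(1)] by auto
    have wb: "W b \<subseteq> A - S" "card (W b) = b" using W[OF that(2)] by auto
    have sub: "U a \<union> W b \<subseteq> A" using ua wb S by auto
    have fin: "finite (U a)" "finite (W b)" using finite_subset[OF ua(1) fS(1)] finite_subset[OF wb(1) fS(2)] by auto
    have card: "card (U a \<union> W b) = a + b"
      using ua wb fin by (subst card_Un_disjoint) auto
    have "f (a + b) = v (U a \<union> W b)" using vf[OF sub] card by simp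
    also have "\<dots> = \<alpha> ((U a \<union> W b) \<inter> S) * \<beta> ((U a \<union> W b) - S)" using prod sub by blast
    also have "(U a \<union> W b) \<inter> S = U a" using ua wb by auto
    also have "(U a \<union> W b) - S = W b" using ua wb by auto
    finally show ?thesis .
  qed
  obtain c x0 x1 where g: "\<forall>m \<le> s + r. f m = c * x0^(s + r - m) * x1^m"
    using geom[of s r f "\<lambda>a. \<alpha> (U a)" "\<lambda>b. \<beta> (W b)", OF s1 r1] h by blast
  show ?thesis
  proof (intro exI allI impI)
    fix x assume x: "x \<subseteq> A"
    have "card x \<le> s + r" using card_mono[OF A x] cA by simp
    then show "v x = c * x0^(card A - card x) * x1^(card x)" using vf[OF x] g cA by simp
  qed
qed

lemma geom_product:
  assumes A: "finite A" and S: "S \<subseteq> A"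
  shows "product_wrt A S (\<lambda>x. c * phi (card A) x0 x1 x)"
  unfolding product_wrt_def
proof (intro exI ballI)
  fix x assume x: "x \<in> Pow A"
  have fx: "finite (x \<inter> S)" "finite (x - S)" using x A finite_subset by auto
  have fS: "finite S" "finite (A - S)" using A S finite_subset by auto
  have cx: "card x = card (x \<inter> S) + card (x - S)"
    using fx by (metis card_Un_disjoint Diff_disjoint Int_Diff_Un inf_commute Int_Diff_disjoint)
  have cA: "card A = card S + card (A - S)"
    using card_Diff_subset[OF fS(1) S] card_mono[OF A S] by simp
  have l1: "card (x \<inter> S) \<le> card S" using fS x by (intro card_mono) auto
  have l2: "card (x - S) \<le> card (A - S)" using fS x by (intro card_mono) auto
  have e: "card A - (card (x \<inter> S) + card (x - S)) = (card S - card (x \<inter> S)) + (card (A - S) - card (x - S))"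
    using cx cA l1 l2 by simp
  show "c * phi (card A) x0 x1 x = (c * phi (card S) x0 x1 (x \<inter> S)) * phi (card (A - S)) x0 x1 (x - S)"
    unfolding phi_def cx e by (simp add: power_add mult_ac)
qed

lemma geom_fullsep:
  assumes A: "finite A"
  shows "pure_fullsep A (\<lambda>x. c * phi (card A) x0 x1 x)"
  unfolding pure_fullsep_def using geom_product[OF A] by blast

lemma phi_unit:
  assumes A: "finite A" and n: "b0 * cnj b0 + b1 * cnj b1 = 1"
  shows "unit_vec A (phi (card A) b0 b1)"
proof -
  have "complex_of_real (\<Sum>x\<in>Pow A. (cmod (phi (card A) b0 b1 x))\<^sup>2)
      = (\<Sum>x\<in>Pow A. (b0 * cnj b0)^(card A - card x) * (b1 * cnj b1)^(card x))"
    unfolding of_real_sum complex_norm_square phi_def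
    by (intro sum.cong refl) (simp add: power_mult_distrib mult_ac)
  also have "\<dots> = 1" using binom_Pow[OF A, of "b0 * cnj b0" "b1 * cnj b1"] n by simp
  finally show ?thesis unfolding unit_vec_def by (simp only: of_real_eq_1_iff)
qed

lemma norm_geom:
  assumes A: "finite A" and u: "unit_vec A v"
    and g: "\<forall>x\<subseteq>A. v x = c * phi (card A) x0 x1 x"
  shows "\<exists>b0 b1. b0 * cnj b0 + b1 * cnj b1 = 1 \<and>
     (\<forall>x y. x \<subseteq> A \<longrightarrow> y \<subseteq> A \<longrightarrow> v x * cnj (v y) = phi (card A) b0 b1 x * cnj (phi (card A) b0 b1 y))"
proof -
  define k where "k = card A"
  define R where "R = (cmod x0)^2 + (cmod x1)^2"
  have "1 = (\<Sum>x\<in>Pow A. (cmod (v x))^2)" using u unfolding unit_vec_def by simp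
  also have "\<dots> = (\<Sum>x\<in>Pow A. (cmod c)^2 * (((cmod x0)^2)^(k - card x) * ((cmod x1)^2)^(card x)))"
    using g unfolding phi_def k_def
    by (intro sum.cong refl) (simp add: norm_mult norm_power power_mult_distrib mult.commute flip: power_mult)
  also have "\<dots> = (cmod c)^2 * R^k"
    unfolding sum_distrib_left[symmetric] R_def k_def using binom_Pow[OF A, of "(cmod x0)^2" "(cmod x1)^2"] by simp
  finally have cR: "(cmod c)^2 * R^k = 1" by simp
  show ?thesis
  proof (cases "k = 0")
    case True
    then have A0: "A = {}" unfolding k_def using A by simp
    have "(cmod c)^2 = 1" using cR True by simp
    then have cc: "c * cnj c = 1" using complex_norm_square[of c] by simp
    show ?thesis
    proof (intro exI conjI allI impI)
      show "1 * cnj 1 + 0 * cnj 0 = (1::complex)" by simp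
      fix x y assume "x \<subseteq> A" "y \<subseteq> A"
      then have "x = {}" "y = {}" using A0 by auto
      then show "v x * cnj (v y) = phi (card A) 1 0 x * cnj (phi (card A) 1 0 y)"
        using g A0 cc unfolding phi_def by simp
    qed
  next
    case False
    have Rpos: "R > 0"
    proof -
      have "R \<ge> 0" unfolding R_def by simp
      moreover have "R \<noteq> 0" using cR False by (metis mult_zero_right zero_neq_one zero_power gr0I)
      ultimately show ?thesis by simp
    qed
    define \<rho> where "\<rho> = sqrt R"
    have \<rho>pos: "\<rho> > 0" unfolding \<rho>_def using Rpos by simp
    have \<rho>2: "\<rho>^2 = R" unfolding \<rho>_def using Rpos by simp
    define b0 where "b0 = x0 / complex_of_real \<rho>"
    define b1 where "b1 = x1 / complex_of_real \<rho>"
    have nb: "b0 * cnj b0 + b1 * cnj b1 = 1"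
    proof -
      have "b0 * cnj b0 + b1 * cnj b1 = (x0 * cnj x0 + x1 * cnj x1) / complex_of_real (\<rho>^2)"
        unfolding b0_def b1_def by (simp add: power2_eq_square add_divide_distrib)
      also have "x0 * cnj x0 + x1 * cnj x1 = complex_of_real R"
        unfolding R_def of_real_add complex_norm_square by (rule refl)
      finally show ?thesis using \<rho>2 Rpos by simp
    qed
    have ph: "phi k b0 b1 x = phi k x0 x1 x / complex_of_real \<rho> ^ k" if "x \<subseteq> A" for x
    proof -
      have "card x \<le> k" unfolding k_def using that A by (simp add: card_mono)
      then have "k = (k - card x) + card x" by simp
      then have "complex_of_real \<rho> ^ k = complex_of_real \<rho> ^ (k - card x) * complex_of_real \<rho> ^ card x"
        by (metis power_add)
      then show ?thesis unfolding phi_def b0_def b1_def by (simp add: power_divide)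
    qed
    have cc: "c * cnj c = 1 / (complex_of_real \<rho> ^ k * complex_of_real \<rho> ^ k)"
    proof -
      have "(cmod c)^2 = 1 / R^k" using cR Rpos by (simp add: field_simps)
      then have "c * cnj c = complex_of_real (1 / R^k)" using complex_norm_square[of c] by simp
      also have "R^k = \<rho>^k * \<rho>^k" using \<rho>2 by (metis power_mult_distrib power2_eq_square)
      finally show ?thesis by simp
    qed
    show ?thesis
    proof (intro exI conjI allI impI)
      show "b0 * cnj b0 + b1 * cnj b1 = 1" by (rule nb)
      fix x y assume x: "x \<subseteq> A" and y: "y \<subseteq> A"
      have "v x * cnj (v y) = (c * cnj c) * (phi k x0 x1 x * cnj (phi k x0 x1 y))"
        using g x y unfolding k_def by simp
      also have "\<dots> = phi k b0 b1 x * cnj (phi k b0 b1 y)"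
        unfolding cc ph[OF x] ph[OF y] using \<rho>pos by (simp add: field_simps)
      finally show "v x * cnj (v y) = phi (card A) b0 b1 x * cnj (phi (card A) b0 b1 y)"
        unfolding k_def .
    qed
  qed
qed

lemma row_to_col:
  assumes "psd A M" "finite A" "i \<in> A" "j \<in> A"
    and row: "\<forall>x\<in>Pow A. \<forall>y\<in>Pow A. M (swap_lbl i j x) y = M x y"
  shows "\<forall>x\<in>Pow A. \<forall>y\<in>Pow A. M x (swap_lbl i j y) = M x y"
proof (intro ballI)
  fix x y assume x: "x \<in> Pow A" and y: "y \<in> Pow A"
  have sy: "swap_lbl i j y \<in> Pow A" using swap_subset assms y by auto
  have "M x (swap_lbl i j y) = cnj (M (swap_lbl i j y) x)" using psd_herm[OF assms(1,2) x sy] .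
  also have "\<dots> = cnj (M y x)" using row x y by simp
  also have "\<dots> = M x y" using psd_herm[OF assms(1,2) x y] by simp
  finally show "M x (swap_lbl i j y) = M x y" .
qed

lemma col_to_row:
  assumes "psd A M" "finite A" "i \<in> A" "j \<in> A"
    and col: "\<forall>x\<in>Pow A. \<forall>y\<in>Pow A. M x (swap_lbl i j y) = M x y"
  shows "\<forall>x\<in>Pow A. \<forall>y\<in>Pow A. M (swap_lbl i j x) y = M x y"
proof (intro ballI)
  fix x y assume x: "x \<in> Pow A" and y: "y \<in> Pow A"
  have sx: "swap_lbl i j x \<in> Pow A" using swap_subset assms x by auto
  have "M (swap_lbl i j x) y = cnj (M y (swap_lbl i j x))" using psd_herm[OF assms(1,2) sx y] .
  also have "\<dots> = cnj (M y x)" using col x y by simp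
  also have "\<dots> = M x y" using psd_herm[OF assms(1,2) x y] by simp
  finally show "M (swap_lbl i j x) y = M x y" .
qed

lemma inv_sym_op:
  assumes A: "finite A"
    and row: "\<forall>i\<in>A. \<forall>j\<in>A. \<forall>x\<in>Pow A. \<forall>y\<in>Pow A. M (swap_lbl i j x) y = M x y"
    and col: "\<forall>i\<in>A. \<forall>j\<in>A. \<forall>x\<in>Pow A. \<forall>y\<in>Pow A. M x (swap_lbl i j y) = M x y"
  shows "sym_op A M"
  unfolding sym_op_def
proof (intro allI impI)
  fix x y x' y' assume h: "x \<subseteq> A" "y \<subseteq> A" "x' \<subseteq> A" "y' \<subseteq> A" "card x = card x'" "card y = card y'"
  have "M x y = M x' y"
    by (rule swap_inv_card[of A "\<lambda>x. M x y", OF A _ h(1,3,5)]) (use row h in auto)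
  also have "\<dots> = M x' y'"
    by (rule swap_inv_card[of A "\<lambda>y. M x' y", OF A _ h(2,4,6)]) (use col h in auto)
  finally show "M x y = M x' y'" .
qed

lemma symstate_row:
  assumes "symmetric_state A M" "finite A" "i \<in> A" "j \<in> A" "x \<in> Pow A" "y \<in> Pow A"
  shows "M (swap_lbl i j x) y = M x y"
proof -
  define e :: qvec where "e = (\<lambda>z. if z = y then 1 else 0)"
  have ap: "apply_op A M e z = M z y" for z
    unfolding apply_op_def e_def using assms(2,6) by (simp add: if_distrib sum.delta cong: if_cong)
  have "symmetric_vec A (apply_op A M e)" using assms(1) unfolding symmetric_state_def by blast
  then show ?thesis using assms(3,4,5) ap unfolding symmetric_vec_def by metis
qed

lemma swap_compose:
  assumes "i \<noteq> j" "j \<noteq> k" "i \<noteq> k"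
  shows "swap_lbl i k x = swap_lbl i j (swap_lbl j k (swap_lbl i j x))"
  using assms unfolding swap_lbl_def by (auto split: if_splits)

lemma tr_swap_split:
  assumes N: "finite N" and S: "S \<subseteq> N" and ij: "i \<in> S" "j \<in> S"
  shows "(\<Sum>x\<in>Pow N. M (swap_lbl i j x) x) = (\<Sum>u\<in>Pow S. ptrace N S M (swap_lbl i j u) u)"
proof -
  have NS: "N = S \<union> (N - S)" using S by auto
  have fin: "finite S" "finite (N - S)" using N S finite_subset by auto
  have "(\<Sum>x\<in>Pow N. M (swap_lbl i j x) x) = (\<Sum>u\<in>Pow S. \<Sum>z\<in>Pow (N - S). M (swap_lbl i j (u \<union> z)) (u \<union> z))"
    by (subst NS) (rule sum_Pow_Un[OF fin], auto)
  also have "\<dots> = (\<Sum>u\<in>Pow S. ptrace N S M (swap_lbl i j u) u)"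
  proof (rule sum.cong[OF refl])
    fix u assume u: "u \<in> Pow S"
    have su: "swap_lbl i j u \<subseteq> S" using swap_subset ij u by auto
    have "(\<Sum>z\<in>Pow (N - S). M (swap_lbl i j (u \<union> z)) (u \<union> z)) = (\<Sum>z\<in>Pow (N - S). M (swap_lbl i j u \<union> z) (u \<union> z))"
    proof (rule sum.cong[OF refl])
      fix z assume "z \<in> Pow (N - S)"
      then have "z \<inter> S = {}" by auto
      then show "M (swap_lbl i j (u \<union> z)) (u \<union> z) = M (swap_lbl i j u \<union> z) (u \<union> z)"
        by (simp add: swap_Un[OF ij])
    qed
    also have "\<dots> = ptrace N S M (swap_lbl i j u) u" unfolding ptrace_def using su u by simp
    finally show "(\<Sum>z\<in>Pow (N - S). M (swap_lbl i j (u \<union> z)) (u \<union> z)) = ptrace N S M (swap_lbl i j u) u" .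
  qed
  finally show ?thesis .
qed

lemma Mw:
  fixes M :: qop
  assumes "finite A" "a \<in> Pow A" "b \<in> Pow A"
  shows "(\<Sum>x\<in>Pow A. M y x * ((if x = a then 1 else 0) - (if x = b then 1 else 0))) = M y a - M y b"
proof -
  have d: "(\<Sum>x\<in>Pow A. M y x * (if x = c then 1 else 0)) = M y c" if "c \<in> Pow A" for c
  proof -
    have "(\<Sum>x\<in>Pow A. M y x * (if x = c then 1 else 0)) = (\<Sum>x\<in>Pow A. if x = c then M y c else 0)"
      by (rule sum.cong[OF refl]) auto
    also have "\<dots> = M y c" using that assms(1) by simp
    finally show ?thesis .
  qed
  have "(\<Sum>x\<in>Pow A. M y x * ((if x = a then 1 else 0) - (if x = b then 1 else 0))) =
    (\<Sum>x\<in>Pow A. M y x * (if x = a then 1 else 0)) - (\<Sum>x\<in>Pow A. M y x * (if x = b then 1 else 0))"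
    by (simp only: right_diff_distrib sum_subtractf)
  then show ?thesis using d assms by simp
qed

lemma qf_diff:
  assumes A: "finite A" and ab: "a \<in> Pow A" "b \<in> Pow A"
  shows "qf A M (\<lambda>z. (if z = a then 1 else 0) - (if z = b then 1 else 0)) (\<lambda>z. (if z = a then 1 else 0) - (if z = b then 1 else 0))
     = M a a - M a b - M b a + M b b"
proof -
  define w :: qvec where "w = (\<lambda>z. (if z = a then 1 else 0) - (if z = b then 1 else 0))"
  have cw: "cnj (w x) = w x" for x unfolding w_def by simp
  have "qf A M w w = (\<Sum>x\<in>Pow A. w x * (\<Sum>y\<in>Pow A. M x y * w y))"
    unfolding qf_def cw by (simp add: sum_distrib_left mult.assoc)
  also have "\<dots> = (\<Sum>x\<in>Pow A. w x * (M x a - M x b))"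
    unfolding w_def Mw[OF A ab] by (rule refl)
  also have "\<dots> = (M a a - M a b) - (M b a - M b b)"
  proof -
    have d: "(\<Sum>x\<in>Pow A. (if x = c then 1 else 0) * (M x a - M x b)) = M c a - M c b" if "c \<in> Pow A" for c
    proof -
      have "(\<Sum>x\<in>Pow A. (if x = c then 1 else 0) * (M x a - M x b)) = (\<Sum>x\<in>Pow A. if x = c then M c a - M c b else 0)"
        by (rule sum.cong) auto
      also have "\<dots> = M c a - M c b" using that A by simp
      finally show ?thesis .
    qed
    have "(\<Sum>x\<in>Pow A. w x * (M x a - M x b)) =
      (\<Sum>x\<in>Pow A. (if x = a then 1 else 0) * (M x a - M x b)) - (\<Sum>x\<in>Pow A. (if x = b then 1 else 0) * (M x a - M x b))"
      unfolding w_def by (simp only: left_diff_distrib sum_subtractf)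
    then show ?thesis using d ab by simp
  qed
  finally show ?thesis unfolding w_def by simp
qed

lemma swap_bij_Pow:
  assumes "i \<in> A" "j \<in> A"
  shows "bij_betw (swap_lbl i j) (Pow A) (Pow A)"
proof (rule bij_betw_byWitness[where f' = "swap_lbl i j"])
  show "\<forall>a\<in>Pow A. swap_lbl i j (swap_lbl i j a) = a" "\<forall>a\<in>Pow A. swap_lbl i j (swap_lbl i j a) = a"
    by (simp_all add: swap_invol)
  show "swap_lbl i j ` Pow A \<subseteq> Pow A" "swap_lbl i j ` Pow A \<subseteq> Pow A"
    using swap_subset[OF assms] by auto
qed

lemma sigma_inv:
  assumes N: "finite N" and d\<sigma>: "density N \<sigma>" and d\<rho>: "density N \<rho>"
    and row\<rho>: "\<forall>x\<in>Pow N. \<forall>y\<in>Pow N. \<rho> (swap_lbl i j x) y = \<rho> x y"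
    and S: "S \<subseteq> N" and ij: "i \<in> S" "j \<in> S"
    and eq: "ptrace N S \<sigma> = ptrace N S \<rho>"
  shows "\<forall>x\<in>Pow N. \<forall>y\<in>Pow N. \<sigma> (swap_lbl i j x) y = \<sigma> x y"
proof -
  have ijN: "i \<in> N" "j \<in> N" using ij S by auto
  define sw where "sw = swap_lbl i j"
  have bij: "bij_betw sw (Pow N) (Pow N)" unfolding sw_def by (rule swap_bij_Pow[OF ijN])
  have swP: "sw x \<in> Pow N" if "x \<in> Pow N" for x using swap_subset[OF ijN] that unfolding sw_def by auto
  have swsw: "sw (sw x) = x" for x unfolding sw_def by (rule swap_invol)
  have psd\<sigma>: "psd N \<sigma>" and tr\<sigma>: "(\<Sum>x\<in>Pow N. \<sigma> x x) = 1"
    using d\<sigma> unfolding density_def trace_op_def by auto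
  have tr\<rho>: "(\<Sum>x\<in>Pow N. \<rho> x x) = 1"
    using d\<rho> unfolding density_def trace_op_def by auto
  have T1: "(\<Sum>x\<in>Pow N. \<sigma> (sw x) x) = (\<Sum>x\<in>Pow N. \<rho> (sw x) x)"
    unfolding sw_def tr_swap_split[OF N S ij] eq by (rule refl)
  have T2: "(\<Sum>x\<in>Pow N. \<rho> (sw x) x) = 1"
    using row\<rho> tr\<rho> unfolding sw_def by simp
  have R1: "(\<Sum>x\<in>Pow N. \<sigma> x (sw x)) = (\<Sum>x\<in>Pow N. \<sigma> (sw x) x)"
  proof -
    have "(\<Sum>x\<in>Pow N. \<sigma> (sw x) (sw (sw x))) = (\<Sum>x\<in>Pow N. \<sigma> x (sw x))"
      by (rule sum.reindex_bij_betw[OF bij])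
    then show ?thesis unfolding swsw by simp
  qed
  have R2: "(\<Sum>x\<in>Pow N. \<sigma> (sw x) (sw x)) = (\<Sum>x\<in>Pow N. \<sigma> x x)"
    by (rule sum.reindex_bij_betw[OF bij])
  define w :: "nat set \<Rightarrow> qvec" where "w x = (\<lambda>z. (if z = x then 1 else 0) - (if z = sw x then 1 else 0))" for x
  have qx: "qf N \<sigma> (w x) (w x) = \<sigma> x x - \<sigma> x (sw x) - \<sigma> (sw x) x + \<sigma> (sw x) (sw x)" if "x \<in> Pow N" for x
    unfolding w_def by (rule qf_diff[OF N that swP[OF that]])
  have Q: "(\<Sum>x\<in>Pow N. qf N \<sigma> (w x) (w x)) = 0"
  proof -
    have "(\<Sum>x\<in>Pow N. qf N \<sigma> (w x) (w x)) = (\<Sum>x\<in>Pow N. \<sigma> x x - \<sigma> x (sw x) - \<sigma> (sw x) x + \<sigma> (sw x) (sw x))"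
      using qx by (rule sum.cong[OF refl])
    also have "\<dots> = (\<Sum>x\<in>Pow N. \<sigma> x x) - (\<Sum>x\<in>Pow N. \<sigma> x (sw x)) - (\<Sum>x\<in>Pow N. \<sigma> (sw x) x) + (\<Sum>x\<in>Pow N. \<sigma> (sw x) (sw x))"
      by (simp only: sum.distrib sum_subtractf)
    also have "\<dots> = 0" unfolding R1 R2 T1 T2 tr\<sigma> by simp
    finally show ?thesis .
  qed
  have q0: "qf N \<sigma> (w x) (w x) = 0" if x: "x \<in> Pow N" for x
  proof -
    have re: "Re (\<Sum>x\<in>Pow N. qf N \<sigma> (w x) (w x)) = 0" using Q by simp
    have "(\<Sum>x\<in>Pow N. Re (qf N \<sigma> (w x) (w x))) = 0" using re by (simp add: Re_sum)
    moreover have "\<forall>x\<in>Pow N. Re (qf N \<sigma> (w x) (w x)) \<ge> 0" using psd_qf[OF psd\<sigma>] by blast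
    ultimately have "Re (qf N \<sigma> (w x) (w x)) = 0"
      using sum_nonneg_eq_0_iff[of "Pow N" "\<lambda>x. Re (qf N \<sigma> (w x) (w x))"] N x by simp
    moreover have "qf N \<sigma> (w x) (w x) \<in> \<real>" using psd_qf[OF psd\<sigma>] by blast
    ultimately show ?thesis by (simp add: complex_is_Real_iff complex_eq_iff)
  qed
  have col: "\<forall>y\<in>Pow N. \<forall>x\<in>Pow N. \<sigma> y (swap_lbl i j x) = \<sigma> y x"
  proof (intro ballI)
    fix x y assume y: "y \<in> Pow N" and x: "x \<in> Pow N"
    have "(\<Sum>z\<in>Pow N. \<sigma> y z * w x z) = 0" by (rule psd_kernel[OF psd\<sigma> N q0[OF x] y])
    then have "\<sigma> y x - \<sigma> y (sw x) = 0" unfolding w_def Mw[OF N x swP[OF x]] .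
    then show "\<sigma> y (swap_lbl i j x) = \<sigma> y x" unfolding sw_def by simp
  qed
  show ?thesis by (rule col_to_row[OF psd\<sigma> N ijN]) (use col in blast)
qed

definition rinv :: "nat set \<Rightarrow> qop \<Rightarrow> nat \<Rightarrow> nat \<Rightarrow> bool" where
  "rinv N M i j \<longleftrightarrow> (\<forall>x\<in>Pow N. \<forall>y\<in>Pow N. M (swap_lbl i j x) y = M x y)"

lemma rinv_refl: "rinv N M i i"
  unfolding rinv_def by (simp add: swap_same)

lemma rinv_sym: "rinv N M i j \<Longrightarrow> rinv N M j i"
  unfolding rinv_def by (simp add: swap_comm)

lemma rinv_trans:
  assumes ijk: "i \<in> N" "j \<in> N" "k \<in> N" and a: "rinv N M i j" and b: "rinv N M j k"
  shows "rinv N M i k"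
proof (cases "i = j \<or> j = k \<or> i = k")
  case True
  then show ?thesis using a b rinv_refl by auto
next
  case False
  then have d: "i \<noteq> j" "j \<noteq> k" "i \<noteq> k" by auto
  show ?thesis unfolding rinv_def
  proof (intro ballI)
    fix x y assume x: "x \<in> Pow N" and y: "y \<in> Pow N"
    have x1: "swap_lbl i j x \<in> Pow N" using swap_subset[OF ijk(1,2)] x by auto
    have x2: "swap_lbl j k (swap_lbl i j x) \<in> Pow N" using swap_subset[OF ijk(2,3)] x1 by auto
    have "M (swap_lbl i k x) y = M (swap_lbl i j (swap_lbl j k (swap_lbl i j x))) y"
      by (simp only: swap_compose[OF d])
    also have "\<dots> = M (swap_lbl j k (swap_lbl i j x)) y" using a x2 y unfolding rinv_def by blast
    also have "\<dots> = M (swap_lbl i j x) y" using b x1 y unfolding rinv_def by blast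
    also have "\<dots> = M x y" using a x y unfolding rinv_def by blast
    finally show "M (swap_lbl i k x) y = M x y" .
  qed
qed

lemma conn_all:
  assumes i0: "i0 \<in> N" and SS: "\<SS> \<subseteq> Pow N" and conn: "hyp_connected N \<SS>"
    and loc: "\<forall>S\<in>\<SS>. \<forall>i\<in>S. \<forall>j\<in>S. rinv N M i j"
  shows "\<forall>i\<in>N. \<forall>j\<in>N. rinv N M i j"
proof -
  define X where "X = {j\<in>N. rinv N M i0 j}"
  have XN: "X = N"
  proof (rule ccontr)
    assume ne: "X \<noteq> N"
    have XsN: "X \<subseteq> N" unfolding X_def by blast
    have "i0 \<in> X" unfolding X_def using i0 rinv_refl by blast
    then have "X \<noteq> {}" by blast
    moreover have "N - X \<noteq> {}" using XsN ne by blast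
    moreover have "X \<inter> (N - X) = {}" by blast
    moreover have "X \<union> (N - X) = N" using XsN by blast
    ultimately have "\<exists>S\<in>\<SS>. S \<inter> X \<noteq> {} \<and> S \<inter> (N - X) \<noteq> {}"
      using spec[OF spec[OF conn[unfolded hyp_connected_def]], of X "N - X"] by (meson conjI mp)
    then obtain S where S: "S \<in> \<SS>" "S \<inter> X \<noteq> {}" "S \<inter> (N - X) \<noteq> {}"
      by blast
    then obtain a b where ab: "a \<in> S" "a \<in> X" "b \<in> S" "b \<in> N - X" by blast
    have abN: "a \<in> N" "b \<in> N" using ab S SS by auto
    have "rinv N M a b" using loc S ab by blast
    moreover have "rinv N M i0 a" using ab unfolding X_def by blast
    ultimately have "rinv N M i0 b" using rinv_trans[OF i0 abN] by blast
    then show False using ab abN unfolding X_def by blast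
  qed
  show ?thesis
  proof (intro ballI)
    fix i j assume i: "i \<in> N" and j: "j \<in> N"
    have "rinv N M i i0" using XN i rinv_sym unfolding X_def by blast
    moreover have "rinv N M i0 j" using XN j unfolding X_def by blast
    ultimately show "rinv N M i j" using rinv_trans[OF i i0 j] by blast
  qed
qed

lemma convex_pure_cong:
  assumes "\<forall>x\<in>Pow A. \<forall>y\<in>Pow A. M x y = M' x y"
  shows "convex_pure A P M = convex_pure A P M'"
  unfolding convex_pure_def using assms by simp

lemma product_wrt_cong:
  assumes "\<forall>x\<in>Pow A. v x = v' x"
  shows "product_wrt A S v = product_wrt A S v'"
  unfolding product_wrt_def using assms by simp

lemma fullsep_cong:
  assumes "\<forall>x\<in>Pow A. v x = v' x" "pure_fullsep A v'"
  shows "pure_fullsep A v"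
  using assms product_wrt_cong[OF assms(1)] unfolding pure_fullsep_def by blast

lemma ptrace_full:
  assumes "x \<subseteq> N" "y \<subseteq> N"
  shows "ptrace N N M x y = M x y"
  using assms unfolding ptrace_def by simp

lemma phi_card: "card x = card x' \<Longrightarrow> phi m a b x = phi m a b x'"
  unfolding phi_def by simp

lemma sub_match:
  assumes "finite W'" "card W = card W'" "finite W" "u \<subseteq> W"
  obtains u' where "u' \<subseteq> W'" "card u' = card u"
proof -
  have "card u \<le> card W'" using assms card_mono by metis
  then show ?thesis using obtain_subset_with_card_n that by metis
qed

lemma sym_fullsep_geom:
  fixes \<psi> :: qvec
  assumes T: "finite T"
    and sym: "\<forall>i\<in>T. \<forall>j\<in>T. \<forall>x\<in>Pow T. \<psi> (swap_lbl i j x) = \<psi> x"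
    and fs: "pure_fullsep T \<psi>"
  shows "\<exists>c x0 x1. \<forall>x\<subseteq>T. \<psi> x = c * phi (card T) x0 x1 x"
proof (cases "card T \<ge> 2")
  case True
  then obtain t where t: "t \<in> T" by (metis card.empty ex_in_conv not_numeral_le_zero)
  have ne: "{t} \<noteq> T" using True by (metis card.empty card_insert_disjoint finite.emptyI insert_absorb
      insert_not_empty numeral_le_one_iff semiring_norm(69) One_nat_def)
  have "product_wrt T {t} \<psi>" using fs t ne unfolding pure_fullsep_def by blast
  then obtain \<alpha> \<beta> where pr: "\<forall>x\<in>Pow T. \<psi> x = \<alpha> (x \<inter> {t}) * \<beta> (x - {t})"
    unfolding product_wrt_def by blast
  obtain c x0 x1 where "\<forall>x\<subseteq>T. \<psi> x = c * x0^(card T - card x) * x1^(card x)"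
    using sym_prod_geom[OF T _ _ ne sym pr] t by blast
  then show ?thesis unfolding phi_def by (metis mult.assoc)
next
  case False
  then have c: "card T = 0 \<or> card T = 1" by auto
  then show ?thesis
  proof
    assume c0: "card T = 0"
    then have "T = {}" using T by simp
    then show ?thesis unfolding phi_def using c0 by (intro exI[of _ "\<psi> {}"]) auto
  next
    assume c1: "card T = 1"
    then obtain t where Tt: "T = {t}" by (metis card_1_singletonE)
    have "\<forall>x\<subseteq>T. \<psi> x = 1 * phi (card T) (\<psi> {}) (\<psi> T) x"
    proof (intro allI impI)
      fix x assume "x \<subseteq> T"
      then have "x = {} \<or> x = T" using Tt by auto
      then show "\<psi> x = 1 * phi (card T) (\<psi> {}) (\<psi> T) x" unfolding phi_def using c1 by auto
    qed
    then show ?thesis by blast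
  qed
qed

lemma rho_GME:
  fixes \<rho> :: qop
  assumes N: "finite N"
    and ent: "entangled N \<rho>"
    and row: "\<forall>i\<in>N. \<forall>j\<in>N. \<forall>x\<in>Pow N. \<forall>y\<in>Pow N. \<rho> (swap_lbl i j x) y = \<rho> x y"
    and col: "\<forall>i\<in>N. \<forall>j\<in>N. \<forall>x\<in>Pow N. \<forall>y\<in>Pow N. \<rho> x (swap_lbl i j y) = \<rho> x y"
  shows "\<not> biseparable N \<rho>"
proof
  assume "biseparable N \<rho>"
  then obtain k :: nat and p :: "nat \<Rightarrow> real" and vs :: "nat \<Rightarrow> qvec" where kp: "\<forall>i<k. p i \<ge> 0 \<and> unit_vec N (vs i) \<and> pure_bisep N (vs i)"
    and s1: "(\<Sum>i<k. p i) = 1"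
    and dec: "\<forall>x\<in>Pow N. \<forall>y\<in>Pow N. \<rho> x y = (\<Sum>i<k. complex_of_real (p i) * vs i x * cnj (vs i y))"
    unfolding biseparable_def convex_pure_def by blast
  define e0 where "e0 = phi (card N) 1 0"
  have e0u: "unit_vec N e0" unfolding e0_def by (rule phi_unit[OF N]) simp
  have e0f: "pure_fullsep N e0"
    by (rule fullsep_cong[OF _ geom_fullsep[OF N, of 1 1 0]]) (simp add: e0_def)
  define vs' where "vs' i = (if p i > 0 then vs i else e0)" for i
  have good: "unit_vec N (vs' i) \<and> pure_fullsep N (vs' i)" if i: "i < k" for i
  proof (cases "p i > 0")
    case False then show ?thesis unfolding vs'_def using e0u e0f by simp
  next
    case True
    have sym: "\<forall>a\<in>N. \<forall>b\<in>N. \<forall>x\<in>Pow N. vs i (swap_lbl a b x) = vs i x"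
    proof (intro ballI)
      fix a b x assume ab: "a \<in> N" "b \<in> N" and x: "x \<in> Pow N"
      show "vs i (swap_lbl a b x) = vs i x"
      proof (rule decomp_sym[OF N ab dec])
        show "\<forall>k'<k. p k' \<ge> 0" using kp by blast
        show "\<forall>x\<in>Pow N. \<forall>y\<in>Pow N. \<rho> (swap_lbl a b x) y = \<rho> x y" using row ab by blast
        show "\<forall>x\<in>Pow N. \<forall>y\<in>Pow N. \<rho> x (swap_lbl a b y) = \<rho> x y" using col ab by blast
      qed (use i True x in auto)
    qed
    obtain S where S: "S \<noteq> {}" "S \<subset> N" "product_wrt N S (vs i)"
      using kp i unfolding pure_bisep_def by blast
    then obtain \<alpha> \<beta> where pr: "\<forall>x\<in>Pow N. vs i x = \<alpha> (x \<inter> S) * \<beta> (x - S)"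
      unfolding product_wrt_def by blast
    have SN: "S \<subseteq> N" "S \<noteq> N" using S by auto
    obtain c x0 x1 where g: "\<forall>x\<subseteq>N. vs i x = c * x0^(card N - card x) * x1^(card x)"
      using sym_prod_geom[OF N SN(1) S(1) SN(2) sym pr] by blast
    have "pure_fullsep N (vs i)"
      by (rule fullsep_cong[OF _ geom_fullsep[OF N, of c x0 x1]]) (use g in \<open>auto simp: phi_def mult.assoc\<close>)
    then show ?thesis using kp i True unfolding vs'_def by simp
  qed
  have "fully_separable N \<rho>"
    unfolding fully_separable_def convex_pure_def
  proof (intro exI conjI allI impI ballI)
    fix i assume "i < k" then show "p i \<ge> 0" "unit_vec N (vs' i)" "pure_fullsep N (vs' i)"
      using kp good by auto
  next
    show "(\<Sum>i<k. p i) = 1" by (rule s1)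
  next
    fix x y assume x: "x \<in> Pow N" and y: "y \<in> Pow N"
    have "\<rho> x y = (\<Sum>i<k. complex_of_real (p i) * vs i x * cnj (vs i y))" using dec x y by blast
    also have "\<dots> = (\<Sum>i<k. complex_of_real (p i) * vs' i x * cnj (vs' i y))"
    proof (rule sum.cong[OF refl])
      fix i assume "i \<in> {..<k}"
      then have "p i \<ge> 0" using kp by auto
      then show "complex_of_real (p i) * vs i x * cnj (vs i y) = complex_of_real (p i) * vs' i x * cnj (vs' i y)"
        unfolding vs'_def by auto
    qed
    finally show "\<rho> x y = (\<Sum>i<k. complex_of_real (p i) * vs' i x * cnj (vs' i y))" .
  qed
  then show False using ent unfolding entangled_def by simp
qed

lemma l_exists:
  fixes \<rho> :: qop
  assumes gme: "\<not> biseparable (qubits n) \<rho>"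
  shows "\<exists>\<SS>'. detects_GME n \<rho> \<SS>' \<and> (\<forall>S\<in>\<SS>'. card S \<le> l_param n \<rho>)"
proof -
  define N where "N = qubits n"
  have det: "detects_GME n \<rho> {N}"
    unfolding detects_GME_def
  proof (intro conjI ballI)
    show "{N} \<subseteq> Pow (qubits n)" unfolding N_def by simp
    fix \<sigma> assume "\<sigma> \<in> compat n \<rho> {N}"
    then have eq: "ptrace N N \<sigma> = ptrace N N \<rho>" unfolding compat_def N_def by simp
    have "\<forall>x\<in>Pow N. \<forall>y\<in>Pow N. \<sigma> x y = \<rho> x y"
    proof (intro ballI)
      fix x y assume "x \<in> Pow N" "y \<in> Pow N"
      then show "\<sigma> x y = \<rho> x y" using eq ptrace_full[of x N y \<sigma>] ptrace_full[of x N y \<rho>] by auto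
    qed
    then have "biseparable N \<sigma> = biseparable N \<rho>" unfolding biseparable_def by (rule convex_pure_cong)
    then show "genuinely_entangled (qubits n) \<sigma>" using gme unfolding genuinely_entangled_def N_def by simp
  qed
  define P where "P k = (\<exists>\<SS>. detects_GME n \<rho> \<SS> \<and> (\<forall>S\<in>\<SS>. card S \<le> k))" for k
  have "P (card N)" unfolding P_def using det by blast
  then have "P (LEAST k. P k)" by (rule LeastI)
  then show ?thesis unfolding P_def l_param_def by blast
qed

lemma sigma_sym:
  assumes N: "finite N" and i0: "i0 \<in> N"
    and d\<sigma>: "density N \<sigma>" and d\<rho>: "density N \<rho>"
    and row\<rho>: "\<forall>i\<in>N. \<forall>j\<in>N. \<forall>x\<in>Pow N. \<forall>y\<in>Pow N. \<rho> (swap_lbl i j x) y = \<rho> x y"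
    and SS: "\<SS> \<subseteq> Pow N" and conn: "hyp_connected N \<SS>"
    and eq: "\<forall>S\<in>\<SS>. ptrace N S \<sigma> = ptrace N S \<rho>"
  shows "sym_op N \<sigma>"
proof -
  have loc: "\<forall>S\<in>\<SS>. \<forall>i\<in>S. \<forall>j\<in>S. rinv N \<sigma> i j"
  proof (intro ballI)
    fix S i j assume S: "S \<in> \<SS>" and ij: "i \<in> S" "j \<in> S"
    have SN: "S \<subseteq> N" using S SS by auto
    have "\<forall>x\<in>Pow N. \<forall>y\<in>Pow N. \<rho> (swap_lbl i j x) y = \<rho> x y" using row\<rho> ij SN by blast
    from sigma_inv[OF N d\<sigma> d\<rho> this SN ij] eq S show "rinv N \<sigma> i j" unfolding rinv_def by blast
  qed
  have all: "\<forall>i\<in>N. \<forall>j\<in>N. rinv N \<sigma> i j" by (rule conn_all[OF i0 SS conn loc])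
  have psd\<sigma>: "psd N \<sigma>" using d\<sigma> unfolding density_def by blast
  show ?thesis
  proof (rule inv_sym_op[OF N])
    show row: "\<forall>i\<in>N. \<forall>j\<in>N. \<forall>x\<in>Pow N. \<forall>y\<in>Pow N. \<sigma> (swap_lbl i j x) y = \<sigma> x y"
      using all unfolding rinv_def by blast
    show "\<forall>i\<in>N. \<forall>j\<in>N. \<forall>x\<in>Pow N. \<forall>y\<in>Pow N. \<sigma> x (swap_lbl i j y) = \<sigma> x y"
    proof (intro ballI)
      fix i j assume ij: "i \<in> N" "j \<in> N"
      have "\<forall>x\<in>Pow N. \<forall>y\<in>Pow N. \<sigma> (swap_lbl i j x) y = \<sigma> x y" using row ij by blast
      from row_to_col[OF psd\<sigma> N ij this] show "\<And>x y. x \<in> Pow N \<Longrightarrow> y \<in> Pow N \<Longrightarrow> \<sigma> x (swap_lbl i j y) = \<sigma> x y" by blast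
    qed
  qed
qed

lemma rho_sym:
  assumes N: "finite N" and d\<rho>: "density N \<rho>" and ss: "symmetric_state N \<rho>"
  shows "\<forall>i\<in>N. \<forall>j\<in>N. \<forall>x\<in>Pow N. \<forall>y\<in>Pow N. \<rho> (swap_lbl i j x) y = \<rho> x y"
    and "\<forall>i\<in>N. \<forall>j\<in>N. \<forall>x\<in>Pow N. \<forall>y\<in>Pow N. \<rho> x (swap_lbl i j y) = \<rho> x y"
    and "sym_op N \<rho>"
proof -
  show row: "\<forall>i\<in>N. \<forall>j\<in>N. \<forall>x\<in>Pow N. \<forall>y\<in>Pow N. \<rho> (swap_lbl i j x) y = \<rho> x y"
    using symstate_row[OF ss N] by blast
  have psd: "psd N \<rho>" using d\<rho> unfolding density_def by blast
  show col: "\<forall>i\<in>N. \<forall>j\<in>N. \<forall>x\<in>Pow N. \<forall>y\<in>Pow N. \<rho> x (swap_lbl i j y) = \<rho> x y"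
  proof (intro ballI)
    fix i j x y assume ij: "i \<in> N" "j \<in> N" and xy: "x \<in> Pow N" "y \<in> Pow N"
    have "\<forall>x\<in>Pow N. \<forall>y\<in>Pow N. \<rho> (swap_lbl i j x) y = \<rho> x y" using row ij by blast
    from row_to_col[OF psd N ij this] xy show "\<rho> x (swap_lbl i j y) = \<rho> x y" by blast
  qed
  show "sym_op N \<rho>" by (rule inv_sym_op[OF N row col])
qed

lemma sigmaT_phi:
  fixes \<sigma> :: qop
  assumes N: "finite N" and T: "T \<subseteq> N" and sym: "sym_op N \<sigma>"
    and fs: "fully_separable T (ptrace N T \<sigma>)"
  shows "\<exists>(K::nat) (p::nat \<Rightarrow> real) a b. (\<forall>i<K. p i \<ge> 0) \<and> (\<Sum>i<K. p i) = 1 \<and>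
     (\<forall>i. a i * cnj (a i) + b i * cnj (b i) = 1) \<and>
     (\<forall>x\<in>Pow T. \<forall>y\<in>Pow T. ptrace N T \<sigma> x y =
        (\<Sum>i<K. complex_of_real (p i) * phi (card T) (a i) (b i) x * cnj (phi (card T) (a i) (b i) y)))"
proof -
  define M where "M = ptrace N T \<sigma>"
  have fT: "finite T" using N T finite_subset by auto
  obtain K :: nat and p :: "nat \<Rightarrow> real" and \<psi> :: "nat \<Rightarrow> qvec"
    where kp: "\<forall>i<K. p i \<ge> 0 \<and> unit_vec T (\<psi> i) \<and> pure_fullsep T (\<psi> i)"
    and s1: "(\<Sum>i<K. p i) = 1"
    and dec: "\<forall>x\<in>Pow T. \<forall>y\<in>Pow T. M x y = (\<Sum>i<K. complex_of_real (p i) * \<psi> i x * cnj (\<psi> i y))"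
    using fs unfolding fully_separable_def convex_pure_def M_def by blast
  have Msym: "M x y = M x' y'" if "x \<subseteq> T" "y \<subseteq> T" "x' \<subseteq> T" "y' \<subseteq> T" "card x = card x'" "card y = card y'" for x y x' y'
    unfolding M_def by (rule ptrace_transport[OF N sym T T refl that])
  have cs: "card (swap_lbl i j x) = card x" if "x \<subseteq> T" for i j x
    using card_swap finite_subset[OF that fT] by blast
  have row: "\<forall>x\<in>Pow T. \<forall>y\<in>Pow T. M (swap_lbl i j x) y = M x y" if ij: "i \<in> T" "j \<in> T" for i j
  proof (intro ballI)
    fix x y assume x: "x \<in> Pow T" and y: "y \<in> Pow T"
    have "swap_lbl i j x \<subseteq> T" using swap_subset[OF ij] x by blast
    moreover have "card (swap_lbl i j x) = card x" using cs x by blast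
    ultimately show "M (swap_lbl i j x) y = M x y" using Msym x y by blast
  qed
  have col: "\<forall>x\<in>Pow T. \<forall>y\<in>Pow T. M x (swap_lbl i j y) = M x y" if ij: "i \<in> T" "j \<in> T" for i j
  proof (intro ballI)
    fix x y assume x: "x \<in> Pow T" and y: "y \<in> Pow T"
    have "swap_lbl i j y \<subseteq> T" using swap_subset[OF ij] y by blast
    moreover have "card (swap_lbl i j y) = card y" using cs y by blast
    ultimately show "M x (swap_lbl i j y) = M x y" using Msym x y by blast
  qed
  have ex: "\<exists>q. fst q * cnj (fst q) + snd q * cnj (snd q) = 1 \<and>
      (i < K \<and> p i > 0 \<longrightarrow> (\<forall>x y. x \<subseteq> T \<longrightarrow> y \<subseteq> T \<longrightarrow>
         \<psi> i x * cnj (\<psi> i y) = phi (card T) (fst q) (snd q) x * cnj (phi (card T) (fst q) (snd q) y)))" for i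
  proof (cases "i < K \<and> p i > 0")
    case False
    then show ?thesis by (intro exI[of _ "(1, 0)"]) auto
  next
    case True
    have symv: "\<forall>a\<in>T. \<forall>b\<in>T. \<forall>x\<in>Pow T. \<psi> i (swap_lbl a b x) = \<psi> i x"
    proof (intro ballI)
      fix a b x assume ab: "a \<in> T" "b \<in> T" and x: "x \<in> Pow T"
      show "\<psi> i (swap_lbl a b x) = \<psi> i x"
      proof (rule decomp_sym[OF fT ab dec])
        show "\<forall>k'<K. p k' \<ge> 0" using kp by blast
      qed (use row[OF ab] col[OF ab] True x in auto)
    qed
    obtain c x0 x1 where g: "\<forall>x\<subseteq>T. \<psi> i x = c * phi (card T) x0 x1 x"
      using sym_fullsep_geom[OF fT symv] kp True by blast
    obtain b0 b1 where bb: "b0 * cnj b0 + b1 * cnj b1 = 1"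
      "\<forall>x y. x \<subseteq> T \<longrightarrow> y \<subseteq> T \<longrightarrow> \<psi> i x * cnj (\<psi> i y) = phi (card T) b0 b1 x * cnj (phi (card T) b0 b1 y)"
      using norm_geom[OF fT _ g] kp True by blast
    show ?thesis using bb by (intro exI[of _ "(b0, b1)"]) simp
  qed
  then obtain f where f: "\<And>i. fst (f i) * cnj (fst (f i)) + snd (f i) * cnj (snd (f i)) = 1 \<and>
      (i < K \<and> p i > 0 \<longrightarrow> (\<forall>x y. x \<subseteq> T \<longrightarrow> y \<subseteq> T \<longrightarrow>
         \<psi> i x * cnj (\<psi> i y) = phi (card T) (fst (f i)) (snd (f i)) x * cnj (phi (card T) (fst (f i)) (snd (f i)) y)))"
    by metis
  show ?thesis
  proof (rule exI[of _ K], rule exI[of _ p], rule exI[of _ "\<lambda>i. fst (f i)"], rule exI[of _ "\<lambda>i. snd (f i)"], intro conjI allI ballI impI)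
    show "\<And>i. i < K \<Longrightarrow> p i \<ge> 0" using kp by blast
    show "(\<Sum>i<K. p i) = 1" by (rule s1)
    show "\<And>i. fst (f i) * cnj (fst (f i)) + snd (f i) * cnj (snd (f i)) = 1" using f by blast
    fix x y assume x: "x \<in> Pow T" and y: "y \<in> Pow T"
    have "ptrace N T \<sigma> x y = (\<Sum>i<K. complex_of_real (p i) * \<psi> i x * cnj (\<psi> i y))"
      using dec x y unfolding M_def by blast
    also have "\<dots> = (\<Sum>i<K. complex_of_real (p i) * phi (card T) (fst (f i)) (snd (f i)) x * cnj (phi (card T) (fst (f i)) (snd (f i)) y))"
    proof (rule sum.cong[OF refl])
      fix i assume i: "i \<in> {..<K}"
      show "complex_of_real (p i) * \<psi> i x * cnj (\<psi> i y) = complex_of_real (p i) * phi (card T) (fst (f i)) (snd (f i)) x * cnj (phi (card T) (fst (f i)) (snd (f i)) y)"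
      proof (cases "p i > 0")
        case True
        then have "\<psi> i x * cnj (\<psi> i y) = phi (card T) (fst (f i)) (snd (f i)) x * cnj (phi (card T) (fst (f i)) (snd (f i)) y)"
          using f[of i] i x y by auto
        then show ?thesis by (simp add: mult.assoc)
      next
        case False
        then have "p i = 0" using kp i by force
        then show ?thesis by simp
      qed
    qed
    finally show "ptrace N T \<sigma> x y = (\<Sum>i<K. complex_of_real (p i) * phi (card T) (fst (f i)) (snd (f i)) x * cnj (phi (card T) (fst (f i)) (snd (f i)) y))" .
  qed
qed

lemma main_contra:
  fixes \<rho> \<sigma> :: qop
  assumes N: "finite N" and i01: "i0 \<in> N" "i1 \<in> N" "i0 \<noteq> i1"
    and sym\<rho>: "sym_op N \<rho>" and sym\<sigma>: "sym_op N \<sigma>"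
    and S0: "S0 \<subseteq> N" and eqS: "ptrace N S0 \<sigma> = ptrace N S0 \<rho>" and lS0: "l \<le> card S0"
    and SS': "\<SS>' \<subseteq> Pow N" and bound: "\<forall>W\<in>\<SS>'. card W \<le> l"
    and allent: "\<And>\<tau>. density N \<tau> \<Longrightarrow> (\<forall>W\<in>\<SS>'. ptrace N W \<tau> = ptrace N W \<rho>) \<Longrightarrow> \<not> biseparable N \<tau>"
    and T: "T \<subseteq> N" and lT: "l \<le> card T" and fs: "fully_separable T (ptrace N T \<sigma>)"
  shows False
proof -
  have fT: "finite T" using N T finite_subset by auto
  have fS0: "finite S0" using N S0 finite_subset by auto
  obtain K :: nat and p :: "nat \<Rightarrow> real" and a b where
    p: "\<forall>i<K. p i \<ge> 0" and s1: "(\<Sum>i<K. p i) = 1" and nrm: "\<forall>i. a i * cnj (a i) + b i * cnj (b i) = 1"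
    and decT: "\<forall>x\<in>Pow T. \<forall>y\<in>Pow T. ptrace N T \<sigma> x y =
        (\<Sum>i<K. complex_of_real (p i) * phi (card T) (a i) (b i) x * cnj (phi (card T) (a i) (b i) y))"
    using sigmaT_phi[OF N T sym\<sigma> fs] by blast
  have nrmK: "\<forall>i<K. a i * cnj (a i) + b i * cnj (b i) = 1" using nrm by blast
  define \<tau> :: qop where "\<tau> x y = (if x \<subseteq> N \<and> y \<subseteq> N then
      (\<Sum>i<K. complex_of_real (p i) * phi (card N) (a i) (b i) x * cnj (phi (card N) (a i) (b i) y)) else 0)" for x y
  have dec\<tau>: "\<forall>x\<in>Pow N. \<forall>y\<in>Pow N. \<tau> x y =
      (\<Sum>i<K. complex_of_real (p i) * phi (card N) (a i) (b i) x * cnj (phi (card N) (a i) (b i) y))"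
    unfolding \<tau>_def by simp
  have unit: "unit_vec N (phi (card N) (a i) (b i))" for i by (rule phi_unit[OF N nrm[rule_format]])
  have psd: "psd N \<tau>" by (rule convex_psd[OF dec\<tau> p])
  have tr: "trace_op N \<tau> = 1"
  proof -
    have "trace_op N \<tau> = (\<Sum>x\<in>Pow N. \<Sum>i<K. complex_of_real (p i) * (phi (card N) (a i) (b i) x * cnj (phi (card N) (a i) (b i) x)))"
      unfolding trace_op_def using dec\<tau> by (intro sum.cong refl) (simp add: mult.assoc)
    also have "\<dots> = (\<Sum>i<K. complex_of_real (p i) * (\<Sum>x\<in>Pow N. phi (card N) (a i) (b i) x * cnj (phi (card N) (a i) (b i) x)))"
      by (simp only: sum_distrib_left) (rule sum.swap)
    also have "\<dots> = (\<Sum>i<K. complex_of_real (p i))"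
    proof (rule sum.cong[OF refl])
      fix i
      have "(\<Sum>x\<in>Pow N. phi (card N) (a i) (b i) x * cnj (phi (card N) (a i) (b i) x))
          = complex_of_real (\<Sum>x\<in>Pow N. (cmod (phi (card N) (a i) (b i) x))^2)"
        by (simp only: of_real_sum complex_norm_square)
      also have "\<dots> = 1" using unit[of i] unfolding unit_vec_def by simp
      finally show "complex_of_real (p i) * (\<Sum>x\<in>Pow N. phi (card N) (a i) (b i) x * cnj (phi (card N) (a i) (b i) x)) = complex_of_real (p i)"
        by simp
    qed
    also have "\<dots> = 1" using s1 by (simp flip: of_real_sum)
    finally show ?thesis .
  qed
  have dens: "density N \<tau>" unfolding density_def using psd tr unfolding \<tau>_def by auto
  have bisep: "biseparable N \<tau>"
    unfolding biseparable_def convex_pure_def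
  proof (intro exI[of _ K] exI[of _ p] exI[of _ "\<lambda>i. phi (card N) (a i) (b i)"] conjI allI impI)
    fix i assume "i < K"
    show "p i \<ge> 0" using p \<open>i < K\<close> by blast
    show "unit_vec N (phi (card N) (a i) (b i))" by (rule unit)
    have "product_wrt N {i0} (\<lambda>x. 1 * phi (card N) (a i) (b i) x)"
      by (rule geom_product[OF N]) (use i01 in auto)
    then have "product_wrt N {i0} (phi (card N) (a i) (b i))" by simp
    moreover have "{i0} \<noteq> {}" "{i0} \<subset> N" using i01 by auto
    ultimately show "pure_bisep N (phi (card N) (a i) (b i))" unfolding pure_bisep_def by blast
  next
    show "(\<Sum>i<K. p i) = 1" by (rule s1)
  next
    show "\<forall>x\<in>Pow N. \<forall>y\<in>Pow N. \<tau> x y = (\<Sum>i<K. complex_of_real (p i) * phi (card N) (a i) (b i) x * cnj (phi (card N) (a i) (b i) y))"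
      by (rule dec\<tau>)
  qed
  have marg: "ptrace N W \<tau> = ptrace N W \<rho>" if W: "W \<in> \<SS>'" for W
  proof (intro ext)
    fix x y
    have WN: "W \<subseteq> N" using W SS' by auto
    have fW: "finite W" using WN N finite_subset by auto
    show "ptrace N W \<tau> x y = ptrace N W \<rho> x y"
    proof (cases "x \<subseteq> W \<and> y \<subseteq> W")
      case False
      then show ?thesis unfolding ptrace_def by (simp only: if_not_P[OF False] if_False)
    next
      case True
      then have x: "x \<subseteq> W" and y: "y \<subseteq> W" by auto
      have cW: "card W \<le> l" using bound W by blast
      have t1: "ptrace N W \<tau> x y = (\<Sum>i<K. complex_of_real (p i) * phi (card W) (a i) (b i) x * cnj (phi (card W) (a i) (b i) y))"
        using marg_phi[where A=N and W=W and K=K and p=p and a=a and b=b and M=\<tau> and u=x and v=y] N WN nrmK dec\<tau> x y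
        by blast
      have c1: "card W \<le> card S0" using cW lS0 by simp
      obtain W1 where W1: "W1 \<subseteq> S0" "card W1 = card W"
        using obtain_subset_with_card_n[OF c1] by blast
      have fW1: "finite W1" using W1 fS0 finite_subset by auto
      obtain u1 where u1: "u1 \<subseteq> W1" "card u1 = card x" using sub_match[OF fW1 W1(2)[symmetric] fW x] by blast
      obtain v1 where v1: "v1 \<subseteq> W1" "card v1 = card y" using sub_match[OF fW1 W1(2)[symmetric] fW y] by blast
      have W1N: "W1 \<subseteq> N" using W1 S0 by auto
      have "ptrace N W \<rho> x y = ptrace N W1 \<rho> u1 v1"
        by (rule ptrace_transport[OF N sym\<rho> WN W1N W1(2)[symmetric] x y u1(1) v1(1) u1(2)[symmetric] v1(2)[symmetric]])
      also have "\<dots> = ptrace S0 W1 (ptrace N S0 \<rho>) u1 v1" by (rule ptrace_comp[OF N W1(1) S0 u1(1) v1(1)])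
      also have "\<dots> = ptrace S0 W1 (ptrace N S0 \<sigma>) u1 v1" unfolding eqS ..
      also have "\<dots> = ptrace N W1 \<sigma> u1 v1" by (rule ptrace_comp[OF N W1(1) S0 u1(1) v1(1), symmetric])
      also have "\<dots> = ptrace N W \<sigma> x y"
        by (rule ptrace_transport[OF N sym\<sigma> W1N WN W1(2) u1(1) v1(1) x y u1(2) v1(2)])
      finally have r1: "ptrace N W \<rho> x y = ptrace N W \<sigma> x y" .
      have c2: "card W \<le> card T" using cW lT by simp
      obtain W2 where W2: "W2 \<subseteq> T" "card W2 = card W"
        using obtain_subset_with_card_n[OF c2] by blast
      have fW2: "finite W2" using W2 fT finite_subset by auto
      obtain u2 where u2: "u2 \<subseteq> W2" "card u2 = card x" using sub_match[OF fW2 W2(2)[symmetric] fW x] by blast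
      obtain v2 where v2: "v2 \<subseteq> W2" "card v2 = card y" using sub_match[OF fW2 W2(2)[symmetric] fW y] by blast
      have W2N: "W2 \<subseteq> N" using W2 T by auto
      have "ptrace N W \<sigma> x y = ptrace N W2 \<sigma> u2 v2"
        by (rule ptrace_transport[OF N sym\<sigma> WN W2N W2(2)[symmetric] x y u2(1) v2(1) u2(2)[symmetric] v2(2)[symmetric]])
      also have "\<dots> = ptrace T W2 (ptrace N T \<sigma>) u2 v2" by (rule ptrace_comp[OF N W2(1) T u2(1) v2(1)])
      also have "\<dots> = (\<Sum>i<K. complex_of_real (p i) * phi (card W2) (a i) (b i) u2 * cnj (phi (card W2) (a i) (b i) v2))"
        using marg_phi[where A=T and W=W2 and K=K and p=p and a=a and b=b and M="ptrace N T \<sigma>" and u=u2 and v=v2] fT W2(1) nrmK decT u2(1) v2(1)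
        by blast
      also have "\<dots> = (\<Sum>i<K. complex_of_real (p i) * phi (card W) (a i) (b i) x * cnj (phi (card W) (a i) (b i) y))"
        unfolding W2(2) using phi_card[OF u2(2)] phi_card[OF v2(2)] by simp
      finally have r2: "ptrace N W \<sigma> x y = (\<Sum>i<K. complex_of_real (p i) * phi (card W) (a i) (b i) x * cnj (phi (card W) (a i) (b i) y))" .
      show ?thesis using t1 r1 r2 by simp
    qed
  qed
  have "\<not> biseparable N \<tau>" by (rule allent[OF dens]) (use marg in blast)
  then show False using bisep by simp
qed

theorem proposition4:
  fixes n :: nat and \<rho> :: qop and \<SS> :: "nat set set"
  assumes "n \<ge> 2"
    and "density (qubits n) \<rho>"
    and "entangled (qubits n) \<rho>"
    and "symmetric_state (qubits n) \<rho>"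
    and "\<SS> \<subseteq> Pow (qubits n)"
    and "hyp_connected (qubits n) \<SS>"
    and "\<exists>S\<in>\<SS>. card S \<ge> l_param n \<rho>"
  shows "\<forall>\<sigma>\<in>compat n \<rho> \<SS>. \<forall>T. T \<subseteq> qubits n \<and> card T \<ge> l_param n \<rho> \<longrightarrow>
           entangled T (ptrace (qubits n) T \<sigma>)"
proof (intro ballI allI impI)
  fix \<sigma> T assume \<sigma>: "\<sigma> \<in> compat n \<rho> \<SS>" and T: "T \<subseteq> qubits n \<and> card T \<ge> l_param n \<rho>"
  define N where "N = qubits n"
  have N: "finite N" unfolding N_def qubits_def by simp
  have i01: "1 \<in> N" "2 \<in> N" "(1::nat) \<noteq> 2" using assms(1) unfolding N_def qubits_def by auto
  have d\<rho>: "density N \<rho>" using assms(2) unfolding N_def .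
  have row: "\<forall>i\<in>N. \<forall>j\<in>N. \<forall>x\<in>Pow N. \<forall>y\<in>Pow N. \<rho> (swap_lbl i j x) y = \<rho> x y"
    and col: "\<forall>i\<in>N. \<forall>j\<in>N. \<forall>x\<in>Pow N. \<forall>y\<in>Pow N. \<rho> x (swap_lbl i j y) = \<rho> x y"
    and sym\<rho>: "sym_op N \<rho>"
    using rho_sym[OF N d\<rho>] assms(4) unfolding N_def by blast+
  have gme: "\<not> biseparable N \<rho>" by (rule rho_GME[OF N _ row col]) (use assms(3) N_def in simp)
  obtain \<SS>' where det: "detects_GME n \<rho> \<SS>'" and bound: "\<forall>S\<in>\<SS>'. card S \<le> l_param n \<rho>"
    using l_exists[of n \<rho>] gme unfolding N_def by blast
  have d\<sigma>: "density N \<sigma>" and eq\<sigma>: "\<forall>S\<in>\<SS>. ptrace N S \<sigma> = ptrace N S \<rho>"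
    using \<sigma> unfolding compat_def N_def by auto
  have SS: "\<SS> \<subseteq> Pow N" using assms(5) unfolding N_def .
  have conn: "hyp_connected N \<SS>" using assms(6) unfolding N_def .
  have sym\<sigma>: "sym_op N \<sigma>" by (rule sigma_sym[OF N i01(1) d\<sigma> d\<rho> row SS conn eq\<sigma>])
  obtain S0 where S0: "S0 \<in> \<SS>" "card S0 \<ge> l_param n \<rho>" using assms(7) by blast
  have SS': "\<SS>' \<subseteq> Pow N" using det unfolding detects_GME_def N_def by blast
  have allent: "\<not> biseparable N \<tau>" if "density N \<tau>" "\<forall>W\<in>\<SS>'. ptrace N W \<tau> = ptrace N W \<rho>" for \<tau>
  proof -
    have "\<tau> \<in> compat n \<rho> \<SS>'" unfolding compat_def using that unfolding N_def by blast
    then have "genuinely_entangled N \<tau>" using det unfolding detects_GME_def N_def by blast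
    then show ?thesis unfolding genuinely_entangled_def .
  qed
  show "entangled T (ptrace (qubits n) T \<sigma>)"
    unfolding entangled_def N_def[symmetric]
  proof
    assume fs: "fully_separable T (ptrace N T \<sigma>)"
    show False
    proof (rule main_contra[OF N i01 sym\<rho> sym\<sigma> _ _ _ SS' bound allent _ _ fs])
      show "S0 \<subseteq> N" using S0 SS by auto
      show "ptrace N S0 \<sigma> = ptrace N S0 \<rho>" using eq\<sigma> S0 by blast
      show "l_param n \<rho> \<le> card S0" by (rule S0(2))
      show "T \<subseteq> N" "l_param n \<rho> \<le> card T" using T unfolding N_def by auto
    qed (auto)
  qed
qed


end
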